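(* In the model described in the context, let $\hat\delta=(\bar Y^{T}_{\cdot\cdot1\cdot}-\bar Y^{C}_{\cdot\cdot1\cdot})-(\bar Y^{T}_{\cdot\cdot2\cdot}-\bar Y^{C}_{\cdot\cdot2\cdot})$, let $$\hat\sigma_e^2=\frac{SS_0}{4N_3N_2(n-1)},\qquad \hat\sigma_{\mathrm{grp}}^2=\frac1n\Big(\frac{SS_1}{4N_3N_2}-\hat\sigma_e^2\Big),\qquad \widehat{\operatorname{Var}}(\hat\delta)=\frac{4}{N_3N_2n}\big(\hat\sigma_e^2+nN_2\hat\sigma_{\mathrm{grp}}^2\big),$$ and $T=(\hat\delta-\delta)/\sqrt{\widehat{\operatorname{Var}}(\hat\delta)}$ (defined when $\widehat{\operatorname{Var}}(\hat\delta)>0$). Then as $N_3,N_2,n\to\infty$, $T$ converges in distribution to $N(0,1)$.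
   Context: Integers $N_3,N_2\ge1$, $n\ge2$. Observations $Y_{ijgk}$, $i=1,\dots,2N_3$, $j=1,\dots,N_2$, $g\in\{1,2\}$, $k=1,\dots,n$, satisfy $$Y_{ijgk}=\beta_0+\tau L_g+\xi X_i+\delta L_gX_i+u_i+u_{j(i)}+v_{g(i)}+\epsilon_{ijgk},$$ with $X_i=1$ for $i\le N_3$, $X_i=0$ otherwise, $L_1=1$, $L_2=0$, fixed $\beta_0,\tau,\xi,\delta\in\mathbb R$, and mutually independent $u_i\sim N(0,\sigma_3^2)$, $u_{j(i)}\sim N(0,\sigma_2^2)$, $v_{g(i)}\sim N(0,\sigma_{\mathrm{grp}}^2)$, $\epsilon_{ijgk}\sim N(0,\sigma_e^2)$ with fixed positive variances. (Equivalently the covariance of two observations in the same level-three unit $i$ is $\sigma_3^2+\sigma_2^2+\sigma_{\mathrm{grp}}^2$ for same $j$, same $g$, different $k$; $\sigma_3^2+\sigma_2^2$ for same $j$, different $g$; $\sigma_3^2+\sigma_{\mathrm{grp}}^2$ for different $j$, same $g$; $\sigma_3^2$ for different $j$ and $g$; observations in different level-three units are independent.) Averages: $\bar Y_{ijg\cdot}=\frac1n\sum_kY_{ijgk}$, $\bar Y^T_{\cdot\cdot g\cdot}=\frac{1}{N_3N_2n}\sum_{i\le N_3}\sum_{j,k}Y_{ijgk}$, $\bar Y^C_{\cdot\cdot g\cdot}=\frac{1}{N_3N_2n}\sum_{i> N_3}\sum_{j,k}Y_{ijgk}$. $SS_0=\sum_{i,j,g,k}(Y_{ijgk}-\bar Y_{ijg\cdot})^2$;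 $SS_1=n\big[\sum_{i\le N_3}\sum_j((\bar Y_{ij1\cdot}-\bar Y_{ij2\cdot})-(\bar Y^T_{\cdot\cdot1\cdot}-\bar Y^T_{\cdot\cdot2\cdot}))^2+\sum_{i>N_3}\sum_j((\bar Y_{ij1\cdot}-\bar Y_{ij2\cdot})-(\bar Y^C_{\cdot\cdot1\cdot}-\bar Y^C_{\cdot\cdot2\cdot}))^2\big]$. *)

theory Defs
  imports "HOL-Probability.Probability"
begin

text \<open>Labels of the mutually independent random effects of the three-level model.
  Level-three units i < 2*N3 (0-based; treated iff i < N3), level-two units j < N2,
  groups g in {1,2}, replicates k < n.\<close>
datatype eff = U3 nat | U2 nat nat | Vg nat nat | Eps nat nat nat nat

definition effects :: "nat \<Rightarrow> nat \<Rightarrow> nat \<Rightarrow> eff set" where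
  "effects N3 N2 n =
     {U3 i | i. i < 2*N3} \<union> {U2 i j | i j. i < 2*N3 \<and> j < N2}
     \<union> {Vg i g | i g. i < 2*N3 \<and> g \<in> {1,2}}
     \<union> {Eps i j g k | i j g k. i < 2*N3 \<and> j < N2 \<and> g \<in> {1,2} \<and> k < n}"

fun eff_sd :: "real \<Rightarrow> real \<Rightarrow> real \<Rightarrow> real \<Rightarrow> eff \<Rightarrow> real" where
  "eff_sd s3 s2 sg se (U3 _) = s3"
| "eff_sd s3 s2 sg se (U2 _ _) = s2"
| "eff_sd s3 s2 sg se (Vg _ _) = sg"
| "eff_sd s3 s2 sg se (Eps _ _ _ _) = se"

definition model_effects ::
  "'a measure \<Rightarrow> nat \<Rightarrow> nat \<Rightarrow> nat \<Rightarrow> real \<Rightarrow> real \<Rightarrow> real \<Rightarrow> real \<Rightarrow> (eff \<Rightarrow> 'a \<Rightarrow> real) \<Rightarrow> bool" where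
  "model_effects M N3 N2 n s3 s2 sg se Z \<longleftrightarrow>
     prob_space M \<and>
     prob_space.indep_vars M (\<lambda>_. borel) Z (effects N3 N2 n) \<and>
     (\<forall>e\<in>effects N3 N2 n.
        distributed M lborel (Z e) (\<lambda>x. ennreal (normal_density 0 (eff_sd s3 s2 sg se e) x)))"

definition Lg :: "nat \<Rightarrow> real" where "Lg g = (if g = 1 then 1 else 0)"
definition Xi :: "nat \<Rightarrow> nat \<Rightarrow> real" where "Xi N3 i = (if i < N3 then 1 else 0)"

definition Yobs ::
  "real \<Rightarrow> real \<Rightarrow> real \<Rightarrow> real \<Rightarrow> nat \<Rightarrow> (eff \<Rightarrow> 'a \<Rightarrow> real) \<Rightarrow> 'a \<Rightarrow> nat \<Rightarrow> nat \<Rightarrow> nat \<Rightarrow> nat \<Rightarrow> real" where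
  "Yobs b0 tau xi dl N3 Z \<omega> i j g k =
     b0 + tau * Lg g + xi * Xi N3 i + dl * Lg g * Xi N3 i
     + Z (U3 i) \<omega> + Z (U2 i j) \<omega> + Z (Vg i g) \<omega> + Z (Eps i j g k) \<omega>"

definition Ybar :: "nat \<Rightarrow> (nat \<Rightarrow> nat \<Rightarrow> nat \<Rightarrow> nat \<Rightarrow> real) \<Rightarrow> nat \<Rightarrow> nat \<Rightarrow> nat \<Rightarrow> real" where
  "Ybar n Y i j g = (\<Sum>k<n. Y i j g k) / real n"

definition YbarT :: "nat \<Rightarrow> nat \<Rightarrow> nat \<Rightarrow> (nat \<Rightarrow> nat \<Rightarrow> nat \<Rightarrow> nat \<Rightarrow> real) \<Rightarrow> nat \<Rightarrow> real" where
  "YbarT N3 N2 n Y g = (\<Sum>i<N3. \<Sum>j<N2. \<Sum>k<n. Y i j g k) / (real N3 * real N2 * real n)"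

definition YbarC :: "nat \<Rightarrow> nat \<Rightarrow> nat \<Rightarrow> (nat \<Rightarrow> nat \<Rightarrow> nat \<Rightarrow> nat \<Rightarrow> real) \<Rightarrow> nat \<Rightarrow> real" where
  "YbarC N3 N2 n Y g = (\<Sum>i\<in>{N3..<2*N3}. \<Sum>j<N2. \<Sum>k<n. Y i j g k) / (real N3 * real N2 * real n)"

definition SS0 :: "nat \<Rightarrow> nat \<Rightarrow> nat \<Rightarrow> (nat \<Rightarrow> nat \<Rightarrow> nat \<Rightarrow> nat \<Rightarrow> real) \<Rightarrow> real" where
  "SS0 N3 N2 n Y = (\<Sum>i<2*N3. \<Sum>j<N2. \<Sum>g\<in>{1,2}. \<Sum>k<n. (Y i j g k - Ybar n Y i j g)\<^sup>2)"

definition SS1 :: "nat \<Rightarrow> nat \<Rightarrow> nat \<Rightarrow> (nat \<Rightarrow> nat \<Rightarrow> nat \<Rightarrow> nat \<Rightarrow> real) \<Rightarrow> real" where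
  "SS1 N3 N2 n Y = real n *
     ((\<Sum>i<N3. \<Sum>j<N2. ((Ybar n Y i j 1 - Ybar n Y i j 2)
                           - (YbarT N3 N2 n Y 1 - YbarT N3 N2 n Y 2))\<^sup>2)
    + (\<Sum>i\<in>{N3..<2*N3}. \<Sum>j<N2. ((Ybar n Y i j 1 - Ybar n Y i j 2)
                           - (YbarC N3 N2 n Y 1 - YbarC N3 N2 n Y 2))\<^sup>2))"

definition delta_hat :: "nat \<Rightarrow> nat \<Rightarrow> nat \<Rightarrow> (nat \<Rightarrow> nat \<Rightarrow> nat \<Rightarrow> nat \<Rightarrow> real) \<Rightarrow> real" where
  "delta_hat N3 N2 n Y = (YbarT N3 N2 n Y 1 - YbarC N3 N2 n Y 1) - (YbarT N3 N2 n Y 2 - YbarC N3 N2 n Y 2)"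

definition sigma_e_hat2 :: "nat \<Rightarrow> nat \<Rightarrow> nat \<Rightarrow> (nat \<Rightarrow> nat \<Rightarrow> nat \<Rightarrow> nat \<Rightarrow> real) \<Rightarrow> real" where
  "sigma_e_hat2 N3 N2 n Y = SS0 N3 N2 n Y / (4 * real N3 * real N2 * (real n - 1))"

definition sigma_grp_hat2 :: "nat \<Rightarrow> nat \<Rightarrow> nat \<Rightarrow> (nat \<Rightarrow> nat \<Rightarrow> nat \<Rightarrow> nat \<Rightarrow> real) \<Rightarrow> real" where
  "sigma_grp_hat2 N3 N2 n Y =
     (SS1 N3 N2 n Y / (4 * real N3 * real N2) - sigma_e_hat2 N3 N2 n Y) / real n"

definition var_hat :: "nat \<Rightarrow> nat \<Rightarrow> nat \<Rightarrow> (nat \<Rightarrow> nat \<Rightarrow> nat \<Rightarrow> nat \<Rightarrow> real) \<Rightarrow> real" where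
  "var_hat N3 N2 n Y = 4 / (real N3 * real N2 * real n) *
     (sigma_e_hat2 N3 N2 n Y + real n * real N2 * sigma_grp_hat2 N3 N2 n Y)"

definition T_stat :: "real \<Rightarrow> nat \<Rightarrow> nat \<Rightarrow> nat \<Rightarrow> (nat \<Rightarrow> nat \<Rightarrow> nat \<Rightarrow> nat \<Rightarrow> real) \<Rightarrow> real" where
  "T_stat dl N3 N2 n Y = (delta_hat N3 N2 n Y - dl) / sqrt (var_hat N3 N2 n Y)"

definition Phi :: "real \<Rightarrow> real" where
  "Phi x = measure (density lborel (\<lambda>t. ennreal (std_normal_density t))) {..x}"

end

theory Submission
  imports Defs
begin


definition aa :: "(eff \<Rightarrow> 'a \<Rightarrow> real) \<Rightarrow> nat \<Rightarrow> 'a \<Rightarrow> real" where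
  "aa Z i \<omega> = Z (Vg i 1) \<omega> - Z (Vg i 2) \<omega>"
definition eb :: "nat \<Rightarrow> (eff \<Rightarrow> 'a \<Rightarrow> real) \<Rightarrow> nat \<Rightarrow> nat \<Rightarrow> nat \<Rightarrow> 'a \<Rightarrow> real" where
  "eb n Z i j g \<omega> = (\<Sum>k<n. Z (Eps i j g k) \<omega>) / real n"
definition bb :: "nat \<Rightarrow> (eff \<Rightarrow> 'a \<Rightarrow> real) \<Rightarrow> nat \<Rightarrow> nat \<Rightarrow> 'a \<Rightarrow> real" where
  "bb n Z i j \<omega> = eb n Z i j 1 \<omega> - eb n Z i j 2 \<omega>"
definition aT :: "nat \<Rightarrow> (eff \<Rightarrow> 'a \<Rightarrow> real) \<Rightarrow> 'a \<Rightarrow> real" where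
  "aT N3 Z \<omega> = (\<Sum>i<N3. aa Z i \<omega>) / real N3"
definition aC :: "nat \<Rightarrow> (eff \<Rightarrow> 'a \<Rightarrow> real) \<Rightarrow> 'a \<Rightarrow> real" where
  "aC N3 Z \<omega> = (\<Sum>i\<in>{N3..<2*N3}. aa Z i \<omega>) / real N3"
definition bT :: "nat \<Rightarrow> nat \<Rightarrow> nat \<Rightarrow> (eff \<Rightarrow> 'a \<Rightarrow> real) \<Rightarrow> 'a \<Rightarrow> real" where
  "bT N3 N2 n Z \<omega> = (\<Sum>i<N3. \<Sum>j<N2. bb n Z i j \<omega>) / (real N3 * real N2)"
definition bC :: "nat \<Rightarrow> nat \<Rightarrow> nat \<Rightarrow> (eff \<Rightarrow> 'a \<Rightarrow> real) \<Rightarrow> 'a \<Rightarrow> real" where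
  "bC N3 N2 n Z \<omega> = (\<Sum>i\<in>{N3..<2*N3}. \<Sum>j<N2. bb n Z i j \<omega>) / (real N3 * real N2)"

context
  fixes b0 tau xi dl :: real and N3 N2 n :: nat and Z :: "eff \<Rightarrow> 'a \<Rightarrow> real" and \<omega> :: 'a
  assumes pos: "N3 > 0" "N2 > 0" "n > 0"
begin

abbreviation "YY \<equiv> Yobs b0 tau xi dl N3 Z \<omega>"

lemma Ybar_eq: "Ybar n YY i j g = b0 + tau*Lg g + xi*Xi N3 i + dl*Lg g*Xi N3 i
   + Z (U3 i) \<omega> + Z (U2 i j) \<omega> + Z (Vg i g) \<omega> + eb n Z i j g \<omega>"
  using pos by (simp add: Ybar_def Yobs_def eb_def sum.distrib add_divide_distrib)

lemma Ydiff: "Ybar n YY i j 1 - Ybar n YY i j 2 = tau + dl * Xi N3 i + aa Z i \<omega> + bb n Z i j \<omega>"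
  by (simp add: Ybar_eq Lg_def aa_def bb_def)

lemmas Ydiff' = Ydiff[simplified]

lemma YbarT_eq: "YbarT N3 N2 n YY g = (\<Sum>i<N3. \<Sum>j<N2. Ybar n YY i j g) / (real N3 * real N2)"
  using pos by (simp add: YbarT_def Ybar_def sum_divide_distrib[symmetric])

lemma YbarC_eq: "YbarC N3 N2 n YY g = (\<Sum>i\<in>{N3..<2*N3}. \<Sum>j<N2. Ybar n YY i j g) / (real N3 * real N2)"
  using pos by (simp add: YbarC_def Ybar_def sum_divide_distrib[symmetric])

lemma diffT: "YbarT N3 N2 n YY 1 - YbarT N3 N2 n YY 2 = tau + dl + aT N3 Z \<omega> + bT N3 N2 n Z \<omega>"
proof -
  have "YbarT N3 N2 n YY 1 - YbarT N3 N2 n YY 2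
      = (\<Sum>i<N3. \<Sum>j<N2. Ybar n YY i j 1 - Ybar n YY i j 2) / (real N3 * real N2)"
    by (simp add: YbarT_eq diff_divide_distrib sum_subtractf)
  also have "\<dots> = (\<Sum>i<N3. \<Sum>j<N2. (tau + dl) + aa Z i \<omega> + bb n Z i j \<omega>) / (real N3 * real N2)"
    by (intro arg_cong2[where f="(/)"] sum.cong refl) (simp add: Ydiff' Xi_def)
  also have "\<dots> = tau + dl + aT N3 Z \<omega> + bT N3 N2 n Z \<omega>"
    using pos by (simp add: sum.distrib aT_def bT_def sum_distrib_left[symmetric] field_simps)
  finally show ?thesis .
qed

lemma diffC: "YbarC N3 N2 n YY 1 - YbarC N3 N2 n YY 2 = tau + aC N3 Z \<omega> + bC N3 N2 n Z \<omega>"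
proof -
  have "YbarC N3 N2 n YY 1 - YbarC N3 N2 n YY 2
      = (\<Sum>i\<in>{N3..<2*N3}. \<Sum>j<N2. Ybar n YY i j 1 - Ybar n YY i j 2) / (real N3 * real N2)"
    by (simp add: YbarC_eq diff_divide_distrib sum_subtractf)
  also have "\<dots> = (\<Sum>i\<in>{N3..<2*N3}. \<Sum>j<N2. tau + aa Z i \<omega> + bb n Z i j \<omega>) / (real N3 * real N2)"
    by (intro arg_cong2[where f="(/)"] sum.cong refl) (simp add: Ydiff' Xi_def)
  also have "\<dots> = tau + aC N3 Z \<omega> + bC N3 N2 n Z \<omega>"
    using pos by (simp add: sum.distrib aC_def bC_def sum_distrib_left[symmetric] field_simps)
  finally show ?thesis .
qed

lemma delta_hat_eq: "delta_hat N3 N2 n YY - dl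
   = (aT N3 Z \<omega> - aC N3 Z \<omega>) + (bT N3 N2 n Z \<omega> - bC N3 N2 n Z \<omega>)"
proof -
  have "delta_hat N3 N2 n YY = (YbarT N3 N2 n YY 1 - YbarT N3 N2 n YY 2) - (YbarC N3 N2 n YY 1 - YbarC N3 N2 n YY 2)"
    by (simp add: delta_hat_def)
  then show ?thesis using diffT diffC by simp
qed

lemma SS1_eq: "SS1 N3 N2 n YY = real n *
   ((\<Sum>i<N3. \<Sum>j<N2. ((aa Z i \<omega> - aT N3 Z \<omega>) + (bb n Z i j \<omega> - bT N3 N2 n Z \<omega>))\<^sup>2)
  + (\<Sum>i\<in>{N3..<2*N3}. \<Sum>j<N2. ((aa Z i \<omega> - aC N3 Z \<omega>) + (bb n Z i j \<omega> - bC N3 N2 n Z \<omega>))\<^sup>2))"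
  unfolding SS1_def diffT diffC
  by (intro arg_cong2[where f="(*)"] refl arg_cong2[where f="(+)"] sum.cong)
     (auto simp: Ydiff' Xi_def algebra_simps)

lemma SS0_eq: "SS0 N3 N2 n YY = (\<Sum>i<2*N3. \<Sum>j<N2. \<Sum>g\<in>{1,2}. \<Sum>k<n. (Z (Eps i j g k) \<omega> - eb n Z i j g \<omega>)\<^sup>2)"
  unfolding SS0_def
  by (intro sum.cong refl) (simp add: Ybar_eq Yobs_def)

end


lemma split2: "(\<Sum>i<2*(N3::nat). f i) = (\<Sum>i<N3. f i) + (\<Sum>i\<in>{N3..<2*N3}. (f i::real))"
proof -
  have "{..<2*N3} = {..<N3} \<union> {N3..<2*N3}" by auto
  then show ?thesis by (simp add: sum.union_disjoint ivl_disj_int)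
qed

lemma sq_dev_eq:
  assumes "finite S" "card S > 0"
  shows "(\<Sum>x\<in>S. (f x - (\<Sum>y\<in>S. f y) / card S)\<^sup>2)
       = (\<Sum>x\<in>S. (f x)\<^sup>2) - card S * ((\<Sum>y\<in>S. f y) / card S)\<^sup>2"
proof -
  define m where "m = (\<Sum>y\<in>S. f y) / card S"
  have sm: "(\<Sum>y\<in>S. f y) = card S * m" using assms by (simp add: m_def)
  have "(\<Sum>x\<in>S. (f x - m)\<^sup>2) = (\<Sum>x\<in>S. (f x)\<^sup>2 - 2 * m * f x + m\<^sup>2)"
    by (intro sum.cong) (auto simp: power2_eq_square algebra_simps)
  also have "\<dots> = (\<Sum>x\<in>S. (f x)\<^sup>2) - 2 * m * (\<Sum>x\<in>S. f x) + card S * m\<^sup>2"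
    by (simp add: sum.distrib sum_subtractf sum_distrib_left)
  also have "\<dots> = (\<Sum>x\<in>S. (f x)\<^sup>2) - card S * m\<^sup>2"
    by (simp add: sm power2_eq_square)
  finally show ?thesis by (simp add: m_def)
qed

lemma sq_dev_le:
  assumes "finite S"
  shows "(\<Sum>x\<in>S. (f x - (\<Sum>y\<in>S. f y) / card S)\<^sup>2) \<le> (\<Sum>x\<in>S. (f x)\<^sup>2)"
proof (cases "card S > 0")
  case True
  then show ?thesis using sq_dev_eq[OF assms True, of f] by (simp add: mult_nonneg_nonneg)
next
  case False
  then have "S = {}" using assms by auto
  then show ?thesis by simp
qed

lemma CS2:
  fixes f g :: "nat \<Rightarrow> nat \<Rightarrow> real"
  shows "(\<Sum>i\<in>I. \<Sum>j\<in>J. f i j * g i j)\<^sup>2 \<le> (\<Sum>i\<in>I. \<Sum>j\<in>J. (f i j)\<^sup>2) * (\<Sum>i\<in>I. \<Sum>j\<in>J. (g i j)\<^sup>2)"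
  using Cauchy_Schwarz_ineq_sum[of "\<lambda>z. f (fst z) (snd z)" "\<lambda>z. g (fst z) (snd z)" "I \<times> J"]
  by (simp add: sum.cartesian_product case_prod_beta)

definition Qv :: "nat \<Rightarrow> (eff \<Rightarrow> 'a \<Rightarrow> real) \<Rightarrow> 'a \<Rightarrow> real" where
  "Qv N3 Z \<omega> = (\<Sum>i<2*N3. (aa Z i \<omega>)\<^sup>2) / (4 * real N3)"
definition Av :: "nat \<Rightarrow> (eff \<Rightarrow> 'a \<Rightarrow> real) \<Rightarrow> 'a \<Rightarrow> real" where
  "Av N3 Z \<omega> = Qv N3 Z \<omega> - ((aT N3 Z \<omega>)\<^sup>2 + (aC N3 Z \<omega>)\<^sup>2) / 4"
definition Bv :: "nat \<Rightarrow> nat \<Rightarrow> nat \<Rightarrow> (eff \<Rightarrow> 'a \<Rightarrow> real) \<Rightarrow> 'a \<Rightarrow> real" where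
  "Bv N3 N2 n Z \<omega> = (\<Sum>i<2*N3. \<Sum>j<N2. (bb n Z i j \<omega>)\<^sup>2) / (4 * real N3 * real N2)"

context
  fixes b0 tau xi dl :: real and N3 N2 n :: nat and Z :: "eff \<Rightarrow> 'a \<Rightarrow> real" and \<omega> :: 'a
  assumes pos: "N3 > 0" "N2 > 0" "n > 0"
begin

abbreviation "YY' \<equiv> Yobs b0 tau xi dl N3 Z \<omega>"

definition "pp i = aa Z i \<omega> - (if i < N3 then aT N3 Z \<omega> else aC N3 Z \<omega>)"
definition "qq i j = bb n Z i j \<omega> - (if i < N3 then bT N3 N2 n Z \<omega> else bC N3 N2 n Z \<omega>)"

lemma SS1_pq: "SS1 N3 N2 n YY' = real n * (\<Sum>i<2*N3. \<Sum>j<N2. (pp i + qq i j)\<^sup>2)"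
  unfolding SS1_eq[OF pos] split2
  by (intro arg_cong2[where f="(*)"] refl arg_cong2[where f="(+)"] sum.cong) (auto simp: pp_def qq_def)

lemma Pp: "(\<Sum>i<2*N3. \<Sum>j<N2. (pp i)\<^sup>2) / (4 * real N3 * real N2) = Av N3 Z \<omega>"
proof -
  have cT: "(\<Sum>i<N3. (aa Z i \<omega> - aT N3 Z \<omega>)\<^sup>2) = (\<Sum>i<N3. (aa Z i \<omega>)\<^sup>2) - N3 * (aT N3 Z \<omega>)\<^sup>2"
    using sq_dev_eq[of "{..<N3}" "\<lambda>i. aa Z i \<omega>"] pos by (simp add: aT_def)
  have cC: "(\<Sum>i\<in>{N3..<2*N3}. (aa Z i \<omega> - aC N3 Z \<omega>)\<^sup>2) = (\<Sum>i\<in>{N3..<2*N3}. (aa Z i \<omega>)\<^sup>2) - N3 * (aC N3 Z \<omega>)\<^sup>2"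
    using sq_dev_eq[of "{N3..<2*N3}" "\<lambda>i. aa Z i \<omega>"] pos by (simp add: aC_def)
  have "(\<Sum>i<2*N3. \<Sum>j<N2. (pp i)\<^sup>2) = N2 * ((\<Sum>i<N3. (aa Z i \<omega> - aT N3 Z \<omega>)\<^sup>2) + (\<Sum>i\<in>{N3..<2*N3}. (aa Z i \<omega> - aC N3 Z \<omega>)\<^sup>2))"
    unfolding split2 by (simp add: pp_def sum_distrib_left distrib_left)
  then have h: "(\<Sum>i<2*N3. \<Sum>j<N2. (pp i)\<^sup>2) = N2 * ((\<Sum>i<2*N3. (aa Z i \<omega>)\<^sup>2) - N3 * (aT N3 Z \<omega>)\<^sup>2 - N3 * (aC N3 Z \<omega>)\<^sup>2)"
    unfolding cT cC split2 by simp
  show ?thesis unfolding h Av_def Qv_def using pos by (simp add: field_simps)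
qed

lemma Qq: "(\<Sum>i<2*N3. \<Sum>j<N2. (qq i j)\<^sup>2) \<le> (\<Sum>i<2*N3. \<Sum>j<N2. (bb n Z i j \<omega>)\<^sup>2)"
proof -
  have cT: "(\<Sum>z\<in>{..<N3}\<times>{..<N2}. (bb n Z (fst z) (snd z) \<omega> - bT N3 N2 n Z \<omega>)\<^sup>2)
     \<le> (\<Sum>z\<in>{..<N3}\<times>{..<N2}. (bb n Z (fst z) (snd z) \<omega>)\<^sup>2)"
    using sq_dev_le[of "{..<N3}\<times>{..<N2}" "\<lambda>z. bb n Z (fst z) (snd z) \<omega>"]
    by (simp add: bT_def sum.cartesian_product case_prod_beta card_cartesian_product)
  have cC: "(\<Sum>z\<in>{N3..<2*N3}\<times>{..<N2}. (bb n Z (fst z) (snd z) \<omega> - bC N3 N2 n Z \<omega>)\<^sup>2)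
     \<le> (\<Sum>z\<in>{N3..<2*N3}\<times>{..<N2}. (bb n Z (fst z) (snd z) \<omega>)\<^sup>2)"
    using sq_dev_le[of "{N3..<2*N3}\<times>{..<N2}" "\<lambda>z. bb n Z (fst z) (snd z) \<omega>"]
    by (simp add: bC_def sum.cartesian_product case_prod_beta card_cartesian_product)
  have e1: "(\<Sum>i<2*N3. \<Sum>j<N2. (qq i j)\<^sup>2) =
    (\<Sum>z\<in>{..<N3}\<times>{..<N2}. (bb n Z (fst z) (snd z) \<omega> - bT N3 N2 n Z \<omega>)\<^sup>2)
    + (\<Sum>z\<in>{N3..<2*N3}\<times>{..<N2}. (bb n Z (fst z) (snd z) \<omega> - bC N3 N2 n Z \<omega>)\<^sup>2)"
  proof -
    have "(\<Sum>i<2*N3. \<Sum>j<N2. (qq i j)\<^sup>2) =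
      (\<Sum>i<N3. \<Sum>j<N2. (bb n Z i j \<omega> - bT N3 N2 n Z \<omega>)\<^sup>2)
      + (\<Sum>i\<in>{N3..<2*N3}. \<Sum>j<N2. (bb n Z i j \<omega> - bC N3 N2 n Z \<omega>)\<^sup>2)"
      unfolding split2 by (intro arg_cong2[where f="(+)"] sum.cong) (auto simp: qq_def)
    then show ?thesis by (simp add: sum.cartesian_product case_prod_beta)
  qed
  have e2: "(\<Sum>i<2*N3. \<Sum>j<N2. (bb n Z i j \<omega>)\<^sup>2) =
    (\<Sum>z\<in>{..<N3}\<times>{..<N2}. (bb n Z (fst z) (snd z) \<omega>)\<^sup>2)
    + (\<Sum>z\<in>{N3..<2*N3}\<times>{..<N2}. (bb n Z (fst z) (snd z) \<omega>)\<^sup>2)"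
    unfolding split2 by (simp add: sum.cartesian_product case_prod_beta)
  show ?thesis unfolding e1 e2 using cT cC by linarith
qed

lemma S1_bounds:
  defines "S1 \<equiv> SS1 N3 N2 n YY' / (4 * real N3 * real N2 * real n)"
  shows "Av N3 Z \<omega> \<ge> 0" "Bv N3 N2 n Z \<omega> \<ge> 0"
    "S1 \<ge> Av N3 Z \<omega> - 2 * sqrt (Av N3 Z \<omega> * Bv N3 N2 n Z \<omega>)"
    "S1 \<le> Av N3 Z \<omega> + 2 * sqrt (Av N3 Z \<omega> * Bv N3 N2 n Z \<omega>) + Bv N3 N2 n Z \<omega>"
proof -
  define K where "K = 4 * real N3 * real N2"
  have K: "K > 0" using pos by (simp add: K_def)
  define P where "P = (\<Sum>i<2*N3. \<Sum>j<N2. (pp i)\<^sup>2) / K"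
  define Q where "Q = (\<Sum>i<2*N3. \<Sum>j<N2. (qq i j)\<^sup>2) / K"
  define C where "C = (\<Sum>i<2*N3. \<Sum>j<N2. pp i * qq i j) / K"
  have PA: "P = Av N3 Z \<omega>" using Pp by (simp add: P_def K_def)
  have QB: "Q \<le> Bv N3 N2 n Z \<omega>" using Qq K by (simp add: Q_def Bv_def K_def divide_right_mono)
  have P0: "P \<ge> 0" unfolding P_def using K by (intro divide_nonneg_pos sum_nonneg) auto
  have Q0: "Q \<ge> 0" unfolding Q_def using K by (intro divide_nonneg_pos sum_nonneg) auto
  have "S1 = (\<Sum>i<2*N3. \<Sum>j<N2. (pp i + qq i j)\<^sup>2) / K"
    using pos unfolding S1_def SS1_pq K_def by simp
  also have "(\<Sum>i<2*N3. \<Sum>j<N2. (pp i + qq i j)\<^sup>2) = (\<Sum>i<2*N3. \<Sum>j<N2. (pp i)\<^sup>2)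
     + 2 * (\<Sum>i<2*N3. \<Sum>j<N2. pp i * qq i j) + (\<Sum>i<2*N3. \<Sum>j<N2. (qq i j)\<^sup>2)"
    by (simp add: power2_eq_square algebra_simps sum.distrib sum_distrib_left)
  finally have S1eq: "S1 = P + 2 * C + Q"
    unfolding P_def Q_def C_def by (simp add: add_divide_distrib)
  have "C\<^sup>2 \<le> P * Q"
  proof -
    have "(\<Sum>i<2*N3. \<Sum>j<N2. pp i * qq i j)\<^sup>2 \<le> (\<Sum>i<2*N3. \<Sum>j<N2. (pp i)\<^sup>2) * (\<Sum>i<2*N3. \<Sum>j<N2. (qq i j)\<^sup>2)"
      by (rule CS2)
    then show ?thesis using K by (simp add: C_def P_def Q_def power_divide divide_right_mono power2_eq_square)
  qed
  also have "\<dots> \<le> P * Bv N3 N2 n Z \<omega>" using QB P0 by (simp add: mult_left_mono)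
  finally have "\<bar>C\<bar> \<le> sqrt (Av N3 Z \<omega> * Bv N3 N2 n Z \<omega>)"
    using PA by (metis real_sqrt_abs real_sqrt_le_mono)
  then show "Av N3 Z \<omega> \<ge> 0" "Bv N3 N2 n Z \<omega> \<ge> 0"
    "S1 \<ge> Av N3 Z \<omega> - 2 * sqrt (Av N3 Z \<omega> * Bv N3 N2 n Z \<omega>)"
    "S1 \<le> Av N3 Z \<omega> + 2 * sqrt (Av N3 Z \<omega> * Bv N3 N2 n Z \<omega>) + Bv N3 N2 n Z \<omega>"
    using S1eq PA QB P0 Q0 by auto
qed

end

definition Ee :: "nat \<Rightarrow> nat \<Rightarrow> nat \<Rightarrow> (eff \<Rightarrow> 'a \<Rightarrow> real) \<Rightarrow> 'a \<Rightarrow> real" where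
  "Ee N3 N2 n Z \<omega> = (\<Sum>i<2*N3. \<Sum>j<N2. \<Sum>g\<in>{1,2}. \<Sum>k<n. (Z (Eps i j g k) \<omega>)\<^sup>2) / (4 * real N3 * real N2 * (real n - 1))"

lemma sige_bounds:
  assumes "N3 > 0" "N2 > 0" "n \<ge> 2"
  shows "0 \<le> sigma_e_hat2 N3 N2 n (Yobs b0 tau xi dl N3 Z \<omega>)"
    "sigma_e_hat2 N3 N2 n (Yobs b0 tau xi dl N3 Z \<omega>) \<le> Ee N3 N2 n Z \<omega>"
proof -
  have pos: "N3 > 0" "N2 > 0" "n > 0" using assms by auto
  have d: "4 * real N3 * real N2 * (real n - 1) > 0" using assms by auto
  have le: "SS0 N3 N2 n (Yobs b0 tau xi dl N3 Z \<omega>) \<le> (\<Sum>i<2*N3. \<Sum>j<N2. \<Sum>g\<in>{1,2}. \<Sum>k<n. (Z (Eps i j g k) \<omega>)\<^sup>2)"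
  proof -
    have inner: "(\<Sum>k<n. (Z (Eps i j g k) \<omega> - eb n Z i j g \<omega>)\<^sup>2) \<le> (\<Sum>k<n. (Z (Eps i j g k) \<omega>)\<^sup>2)" for i j g
      using sq_dev_le[of "{..<n}" "\<lambda>k. Z (Eps i j g k) \<omega>"] by (simp add: eb_def)
    show ?thesis unfolding SS0_eq[OF pos] by (rule sum_mono[OF sum_mono[OF sum_mono[OF inner]]])
  qed
  have ge: "0 \<le> SS0 N3 N2 n (Yobs b0 tau xi dl N3 Z \<omega>)"
    unfolding SS0_def by (intro sum_nonneg) auto
  show "0 \<le> sigma_e_hat2 N3 N2 n (Yobs b0 tau xi dl N3 Z \<omega>)"
    using ge d by (simp add: sigma_e_hat2_def)
  show "sigma_e_hat2 N3 N2 n (Yobs b0 tau xi dl N3 Z \<omega>) \<le> Ee N3 N2 n Z \<omega>"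
    using le d unfolding sigma_e_hat2_def Ee_def by (intro divide_right_mono) auto
qed

lemma var_hat_ratio:
  fixes se sg :: real
  assumes "N3 > 0" "N2 > 0" "n > 0" "se > 0" "sg > 0"
  defines "V \<equiv> 4 / (real N3 * real N2 * real n) * (se\<^sup>2 + real n * real N2 * sg\<^sup>2)"
  shows "var_hat N3 N2 n Y / V =
     (sigma_e_hat2 N3 N2 n Y * (1 - real N2) / (real n * real N2) + SS1 N3 N2 n Y / (4 * real N3 * real N2 * real n))
     / (se\<^sup>2 / (real n * real N2) + sg\<^sup>2)"
proof -
  have D: "se\<^sup>2 + real n * real N2 * sg\<^sup>2 > 0" using assms by (simp add: add_pos_pos)
  define x where "x = sigma_e_hat2 N3 N2 n Y"
  define y where "y = SS1 N3 N2 n Y"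
  have c: "4 / (real N3 * real N2 * real n) > 0" using assms by simp
  have "var_hat N3 N2 n Y = 4 / (real N3 * real N2 * real n) * (x * (1 - real N2) + y / (4 * real N3))"
    using assms unfolding var_hat_def sigma_grp_hat2_def x_def[symmetric] y_def[symmetric]
    by (simp add: field_simps)
  then have "var_hat N3 N2 n Y / V = (x * (1 - real N2) + y / (4 * real N3)) / (se\<^sup>2 + real n * real N2 * sg\<^sup>2)"
    unfolding V_def using c assms(1-3) by (simp only:) (subst mult_divide_mult_cancel_left, auto)
  also have "\<dots> = ((x * (1 - real N2) + y / (4 * real N3)) / (real n * real N2)) / ((se\<^sup>2 + real n * real N2 * sg\<^sup>2) / (real n * real N2))"
    using assms by simp
  also have "\<dots> = (x * (1 - real N2) / (real n * real N2) + y / (4 * real N3 * real N2 * real n))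
     / (se\<^sup>2 / (real n * real N2) + sg\<^sup>2)"
    using assms by (simp add: add_divide_distrib)
  finally show ?thesis unfolding x_def y_def .
qed


lemma (in prob_space) lin_normal:
  assumes J: "finite J" "J \<noteq> {}" "inj_on \<iota> J" "\<iota> ` J \<subseteq> I"
    and ind: "indep_vars (\<lambda>_. borel) X I"
    and D: "\<And>j. j \<in> J \<Longrightarrow> distributed M lborel (X (\<iota> j)) (\<lambda>x. ennreal (normal_density 0 (s j) x))"
    and s: "\<And>j. j \<in> J \<Longrightarrow> s j > 0" and w: "\<And>j. j \<in> J \<Longrightarrow> w j \<noteq> 0"
  shows "distributed M lborel (\<lambda>\<omega>. \<Sum>j\<in>J. w j * X (\<iota> j) \<omega>)
           (\<lambda>x. ennreal (normal_density 0 (sqrt (\<Sum>j\<in>J. (\<bar>w j\<bar> * s j)\<^sup>2)) x))"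
proof -
  have i1: "indep_vars (\<lambda>j. PiM {\<iota> j} (\<lambda>_. borel)) (\<lambda>j \<omega>. restrict (\<lambda>i. X i \<omega>) {\<iota> j}) J"
    using J by (intro indep_vars_restrict[OF ind]) (auto simp: disjoint_family_on_def inj_on_def)
  have i2: "indep_vars (\<lambda>_. borel) (\<lambda>j \<omega>. w j * (restrict (\<lambda>i. X i \<omega>) {\<iota> j}) (\<iota> j)) J"
    by (rule indep_vars_compose2[OF i1, where Y="\<lambda>j f. w j * f (\<iota> j)"]) measurable
  have i3: "indep_vars (\<lambda>_. borel) (\<lambda>j \<omega>. w j * X (\<iota> j) \<omega>) J"
    using i2 by simp
  have N: "distributed M lborel (\<lambda>\<omega>. w j * X (\<iota> j) \<omega>) (\<lambda>x. ennreal (normal_density 0 (\<bar>w j\<bar> * s j) x))"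
    if "j \<in> J" for j
    using normal_density_affine[OF D[OF that] s[OF that] w[OF that], of 0] by simp
  show ?thesis
    using sum_indep_normal[OF J(1,2) i3, of "\<lambda>j. \<bar>w j\<bar> * s j" "\<lambda>_. 0"] N s w by simp
qed

lemma (in prob_space) normal_moments:
  assumes D: "distributed M lborel X (\<lambda>x. ennreal (normal_density 0 \<sigma> x))" and s: "\<sigma> > 0"
  shows "integrable M (\<lambda>\<omega>. X \<omega> ^ k)"
    "expectation (\<lambda>\<omega>. (X \<omega>)\<^sup>2) = \<sigma>\<^sup>2"
    "expectation (\<lambda>\<omega>. X \<omega> ^ 4) = 3 * \<sigma> ^ 4"
proof -
  show "integrable M (\<lambda>\<omega>. X \<omega> ^ k)"
    using distributed_integrable[OF D, of "\<lambda>x. x ^ k"] integrable_normal_moment[where \<mu>=0 and \<sigma>=\<sigma> and k=k] s by simp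
  have "expectation (\<lambda>\<omega>. X \<omega> ^ (2*1)) = fact (2 * 1) / ((2 / \<sigma>\<^sup>2)^1 * fact 1)"
    using distributed_integral[OF D, of "\<lambda>x. x ^ (2*1)"] integral_normal_moment_even[OF s, where k=1 and \<mu>=0] by simp
  then show "expectation (\<lambda>\<omega>. (X \<omega>)\<^sup>2) = \<sigma>\<^sup>2" by simp
  have "expectation (\<lambda>\<omega>. X \<omega> ^ (2*2)) = fact (2 * 2) / ((2 / \<sigma>\<^sup>2)^2 * fact 2)"
    using distributed_integral[OF D, of "\<lambda>x. x ^ (2*2)"] integral_normal_moment_even[OF s, where k=2 and \<mu>=0] by simp
  then show "expectation (\<lambda>\<omega>. X \<omega> ^ 4) = 3 * \<sigma> ^ 4"
    by (simp add: fact_numeral power2_eq_square field_simps power4_eq_xxxx)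
qed

lemma (in prob_space) sum_sq_indep:
  fixes W :: "'i \<Rightarrow> 'a \<Rightarrow> real"
  assumes fin: "finite I" and ind: "indep_vars (\<lambda>_. borel) W I"
    and int: "\<And>i. i \<in> I \<Longrightarrow> integrable M (W i)" "\<And>i. i \<in> I \<Longrightarrow> integrable M (\<lambda>\<omega>. (W i \<omega>)\<^sup>2)"
    and m0: "\<And>i. i \<in> I \<Longrightarrow> expectation (W i) = 0"
  shows "integrable M (\<lambda>\<omega>. (\<Sum>i\<in>I. W i \<omega>)\<^sup>2)"
    "expectation (\<lambda>\<omega>. (\<Sum>i\<in>I. W i \<omega>)\<^sup>2) = (\<Sum>i\<in>I. expectation (\<lambda>\<omega>. (W i \<omega>)\<^sup>2))"
proof -
  have pair: "integrable M (\<lambda>\<omega>. W i \<omega> * W j \<omega>) \<and> expectation (\<lambda>\<omega>. W i \<omega> * W j \<omega>) = 0"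
    if "i \<in> I" "j \<in> I" "i \<noteq> j" for i j
  proof -
    have "indep_var borel ((\<lambda>f. f i) \<circ> (\<lambda>\<omega>. restrict (\<lambda>i. W i \<omega>) {i}))
                    borel ((\<lambda>f. f j) \<circ> (\<lambda>\<omega>. restrict (\<lambda>i. W i \<omega>) {j}))"
      using that by (intro indep_var_compose[OF indep_var_restrict[OF ind]]) auto
    then have iv: "indep_var borel (W i) borel (W j)" by (simp add: comp_def)
    show ?thesis
      using indep_var_lebesgue_integral[OF iv int(1)[OF that(1)] int(1)[OF that(2)]]
        indep_var_integrable[OF iv int(1)[OF that(1)] int(1)[OF that(2)]] m0 that by simp
  qed
  have intp: "integrable M (\<lambda>\<omega>. W i \<omega> * W j \<omega>)" if "i \<in> I" "j \<in> I" for i j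
    using pair[OF that] int(2)[OF that(1)] by (cases "i = j") (auto simp: power2_eq_square)
  have sq: "(\<lambda>\<omega>. (\<Sum>i\<in>I. W i \<omega>)\<^sup>2) = (\<lambda>\<omega>. \<Sum>i\<in>I. \<Sum>j\<in>I. W i \<omega> * W j \<omega>)"
    by (simp add: power2_eq_square sum_product)
  show "integrable M (\<lambda>\<omega>. (\<Sum>i\<in>I. W i \<omega>)\<^sup>2)"
    unfolding sq by (intro Bochner_Integration.integrable_sum intp)
  have "expectation (\<lambda>\<omega>. (\<Sum>i\<in>I. W i \<omega>)\<^sup>2) = (\<Sum>i\<in>I. \<Sum>j\<in>I. expectation (\<lambda>\<omega>. W i \<omega> * W j \<omega>))"
    unfolding sq using intp by (simp add: Bochner_Integration.integral_sum integrable_sum)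
  also have "\<dots> = (\<Sum>i\<in>I. expectation (\<lambda>\<omega>. W i \<omega> * W i \<omega>))"
  proof (intro sum.cong refl)
    fix i assume i: "i \<in> I"
    have "(\<Sum>j\<in>I. expectation (\<lambda>\<omega>. W i \<omega> * W j \<omega>)) = (\<Sum>j\<in>{i}. expectation (\<lambda>\<omega>. W i \<omega> * W j \<omega>))"
      using i fin pair[OF i] by (intro sum.mono_neutral_right) auto
    then show "(\<Sum>j\<in>I. expectation (\<lambda>\<omega>. W i \<omega> * W j \<omega>)) = expectation (\<lambda>\<omega>. W i \<omega> * W i \<omega>)" by simp
  qed
  finally show "expectation (\<lambda>\<omega>. (\<Sum>i\<in>I. W i \<omega>)\<^sup>2) = (\<Sum>i\<in>I. expectation (\<lambda>\<omega>. (W i \<omega>)\<^sup>2))"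
    by (simp add: power2_eq_square)
qed


lemma mem_effects[simp]:
  "U3 i \<in> effects N3 N2 n \<longleftrightarrow> i < 2*N3"
  "U2 i j \<in> effects N3 N2 n \<longleftrightarrow> i < 2*N3 \<and> j < N2"
  "Vg i g \<in> effects N3 N2 n \<longleftrightarrow> i < 2*N3 \<and> g \<in> {1,2}"
  "Eps i j g k \<in> effects N3 N2 n \<longleftrightarrow> i < 2*N3 \<and> j < N2 \<and> g \<in> {1,2} \<and> k < n"
  unfolding effects_def by blast+

locale mdl =
  fixes M :: "'a measure" and N3 N2 n :: nat and s3 s2 sg se :: real and Z :: "eff \<Rightarrow> 'a \<Rightarrow> real"
  assumes me: "model_effects M N3 N2 n s3 s2 sg se Z"
    and N3: "N3 \<ge> 1" and N2: "N2 \<ge> 1" and nn: "n \<ge> 2"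
    and sd: "s3 > 0" "s2 > 0" "sg > 0" "se > 0"
begin

sublocale prob_space M using me by (simp add: model_effects_def)

lemma ind: "indep_vars (\<lambda>_. borel) Z (effects N3 N2 n)"
  using me by (simp add: model_effects_def)

lemma Zd: "e \<in> effects N3 N2 n \<Longrightarrow>
   distributed M lborel (Z e) (\<lambda>x. ennreal (normal_density 0 (eff_sd s3 s2 sg se e) x))"
  using me by (simp add: model_effects_def)

lemma Zm: "e \<in> effects N3 N2 n \<Longrightarrow> Z e \<in> borel_measurable M"
  using distributed_measurable[OF Zd] by simp

lemma Zd_Vg: "i < 2*N3 \<Longrightarrow> g \<in> {1,2} \<Longrightarrow>
   distributed M lborel (Z (Vg i g)) (\<lambda>x. ennreal (normal_density 0 sg x))"
  using Zd[of "Vg i g"] by simp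

lemma Zd_Eps: "i < 2*N3 \<Longrightarrow> j < N2 \<Longrightarrow> g \<in> {1,2} \<Longrightarrow> k < n \<Longrightarrow>
   distributed M lborel (Z (Eps i j g k)) (\<lambda>x. ennreal (normal_density 0 se x))"
  using Zd[of "Eps i j g k"] by simp

lemma sdpos: "eff_sd s3 s2 sg se e > 0"
  using sd by (cases e) auto

lemma aa_dist: assumes "i < 2*N3"
  shows "distributed M lborel (aa Z i) (\<lambda>x. ennreal (normal_density 0 (sqrt (2 * sg\<^sup>2)) x))"
proof -
  have "distributed M lborel (\<lambda>\<omega>. \<Sum>g\<in>{1::nat,2}. (if g = 1 then 1 else -1) * Z (Vg i g) \<omega>)
      (\<lambda>x. ennreal (normal_density 0 (sqrt (\<Sum>g\<in>{1::nat,2}. (\<bar>if g = 1 then 1 else -1\<bar> * eff_sd s3 s2 sg se (Vg i g))\<^sup>2)) x))"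
    apply (rule lin_normal[OF _ _ _ _ ind])
    using assms sd by (auto simp: inj_on_def intro!: Zd_Vg)
  moreover have "(\<lambda>\<omega>. \<Sum>g\<in>{1::nat,2}. (if g = 1 then 1 else -1) * Z (Vg i g) \<omega>) = aa Z i"
    by (simp add: aa_def fun_eq_iff)
  moreover have "(\<Sum>g\<in>{1::nat,2}. (\<bar>if g = 1 then 1 else -1\<bar> * eff_sd s3 s2 sg se (Vg i g))\<^sup>2) = 2 * sg\<^sup>2"
    by simp
  ultimately show ?thesis by simp
qed


lemma lin_Z:
  assumes "finite J" "J \<noteq> {}" "inj_on \<iota> J" "\<iota> ` J \<subseteq> effects N3 N2 n" "\<And>j. j \<in> J \<Longrightarrow> w j \<noteq> 0"
    "\<And>\<omega>. f \<omega> = (\<Sum>j\<in>J. w j * Z (\<iota> j) \<omega>)"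
    "v = (\<Sum>j\<in>J. (\<bar>w j\<bar> * eff_sd s3 s2 sg se (\<iota> j))\<^sup>2)"
  shows "distributed M lborel f (\<lambda>x. ennreal (normal_density 0 (sqrt v) x))"
proof -
  have "f = (\<lambda>\<omega>. \<Sum>j\<in>J. w j * Z (\<iota> j) \<omega>)" using assms(6) by auto
  then show ?thesis unfolding assms(7)
    using lin_normal[OF assms(1-3) assms(4) ind, of "\<lambda>j. eff_sd s3 s2 sg se (\<iota> j)" w] assms(4,5) sdpos
    by (auto intro!: Zd)
qed

lemma aT_dist:
  "distributed M lborel (aT N3 Z) (\<lambda>x. ennreal (normal_density 0 (sqrt (2 * sg\<^sup>2 / N3)) x))"
proof (rule lin_Z[where J="{..<N3} \<times> {1,2}" and \<iota>="\<lambda>(i,g). Vg i g"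
      and w="\<lambda>(i,g). (if g = 1 then 1 else -1) / real N3"])
  show "finite ({..<N3} \<times> {1::nat,2})" by simp
  show "{..<N3} \<times> {1::nat,2} \<noteq> {}" using N3 by (auto simp: lessThan_empty_iff)
  show "inj_on (\<lambda>(i,g). Vg i g) ({..<N3} \<times> {1::nat,2})" by (auto simp: inj_on_def)
  show "(\<lambda>(i,g). Vg i g) ` ({..<N3} \<times> {1::nat,2}) \<subseteq> effects N3 N2 n" by auto
  show "\<And>j. j \<in> {..<N3} \<times> {1::nat,2} \<Longrightarrow> (\<lambda>(i,g). (if g = 1 then 1 else -1) / real N3) j \<noteq> 0"
    using N3 by auto
  show "aT N3 Z \<omega> = (\<Sum>j\<in>{..<N3} \<times> {1::nat,2}. (\<lambda>(i,g). (if g = 1 then 1 else -1) / real N3) j * Z ((\<lambda>(i,g). Vg i g) j) \<omega>)" for \<omega>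
    by (simp add: sum.cartesian_product' aT_def aa_def sum_divide_distrib diff_divide_distrib)
  have "(\<Sum>j\<in>{..<N3} \<times> {1::nat,2}. (\<bar>(\<lambda>(i,g). (if g = 1 then 1 else -1) / real N3) j\<bar> * eff_sd s3 s2 sg se ((\<lambda>(i,g). Vg i g) j))\<^sup>2)
     = (\<Sum>j\<in>{..<N3} \<times> {1::nat,2}. (sg / N3)\<^sup>2)"
    by (intro sum.cong) auto
  also have "\<dots> = 2 * sg\<^sup>2 / N3" using N3 by (simp add: power2_eq_square)
  finally show "2 * sg\<^sup>2 / N3 = (\<Sum>j\<in>{..<N3} \<times> {1::nat,2}. (\<bar>(\<lambda>(i,g). (if g = 1 then 1 else -1) / real N3) j\<bar> * eff_sd s3 s2 sg se ((\<lambda>(i,g). Vg i g) j))\<^sup>2)"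
    by simp
qed


lemma aC_dist:
  "distributed M lborel (aC N3 Z) (\<lambda>x. ennreal (normal_density 0 (sqrt (2 * sg\<^sup>2 / N3)) x))"
proof (rule lin_Z[where J="{N3..<2*N3} \<times> {1,2}" and \<iota>="\<lambda>(i,g). Vg i g"
      and w="\<lambda>(i,g). (if g = 1 then 1 else -1) / real N3"])
  show "finite ({N3..<2*N3} \<times> {1::nat,2})" by simp
  show "{N3..<2*N3} \<times> {1::nat,2} \<noteq> {}" using N3 by auto
  show "inj_on (\<lambda>(i,g). Vg i g) ({N3..<2*N3} \<times> {1::nat,2})" by (auto simp: inj_on_def)
  show "(\<lambda>(i,g). Vg i g) ` ({N3..<2*N3} \<times> {1::nat,2}) \<subseteq> effects N3 N2 n" by auto
  show "\<And>j. j \<in> {N3..<2*N3} \<times> {1::nat,2} \<Longrightarrow> (\<lambda>(i,g). (if g = 1 then 1 else -1) / real N3) j \<noteq> 0"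
    using N3 by auto
  show "aC N3 Z \<omega> = (\<Sum>j\<in>{N3..<2*N3} \<times> {1::nat,2}. (\<lambda>(i,g). (if g = 1 then 1 else -1) / real N3) j * Z ((\<lambda>(i,g). Vg i g) j) \<omega>)" for \<omega>
    by (simp add: sum.cartesian_product' aC_def aa_def sum_divide_distrib diff_divide_distrib)
  have "(\<Sum>j\<in>{N3..<2*N3} \<times> {1::nat,2}. (\<bar>(\<lambda>(i,g). (if g = 1 then 1 else -1) / real N3) j\<bar> * eff_sd s3 s2 sg se ((\<lambda>(i,g). Vg i g) j))\<^sup>2)
     = (\<Sum>j\<in>{N3..<2*N3} \<times> {1::nat,2}. (sg / N3)\<^sup>2)"
    by (intro sum.cong) auto
  also have "\<dots> = 2 * sg\<^sup>2 / N3" using N3 by (simp add: power2_eq_square)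
  finally show "2 * sg\<^sup>2 / N3 = (\<Sum>j\<in>{N3..<2*N3} \<times> {1::nat,2}. (\<bar>(\<lambda>(i,g). (if g = 1 then 1 else -1) / real N3) j\<bar> * eff_sd s3 s2 sg se ((\<lambda>(i,g). Vg i g) j))\<^sup>2)"
    by simp
qed

lemma bb_dist: assumes ij: "i < 2*N3" "j < N2"
  shows "distributed M lborel (bb n Z i j) (\<lambda>x. ennreal (normal_density 0 (sqrt (2 * se\<^sup>2 / n)) x))"
proof (rule lin_Z[where J="{1,2} \<times> {..<n}" and \<iota>="\<lambda>(g,k). Eps i j g k"
      and w="\<lambda>(g,k). (if g = 1 then 1 else -1) / real n"])
  show "finite ({1::nat,2} \<times> {..<n})" by simp
  show "{1::nat,2} \<times> {..<n} \<noteq> {}" using nn by (auto simp: lessThan_empty_iff)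
  show "inj_on (\<lambda>(g,k). Eps i j g k) ({1::nat,2} \<times> {..<n})" by (auto simp: inj_on_def)
  show "(\<lambda>(g,k). Eps i j g k) ` ({1::nat,2} \<times> {..<n}) \<subseteq> effects N3 N2 n" using ij by auto
  show "\<And>z. z \<in> {1::nat,2} \<times> {..<n} \<Longrightarrow> (\<lambda>(g,k). (if g = 1 then 1 else -1) / real n) z \<noteq> 0"
    using nn by auto
  show "bb n Z i j \<omega> = (\<Sum>z\<in>{1::nat,2} \<times> {..<n}. (\<lambda>(g,k). (if g = 1 then 1 else -1) / real n) z * Z ((\<lambda>(g,k). Eps i j g k) z) \<omega>)" for \<omega>
    by (simp add: sum.cartesian_product' bb_def eb_def sum_divide_distrib diff_divide_distrib sum_negf)
  have "(\<Sum>z\<in>{1::nat,2} \<times> {..<n}. (\<bar>(\<lambda>(g,k). (if g = 1 then 1 else -1) / real n) z\<bar> * eff_sd s3 s2 sg se ((\<lambda>(g,k). Eps i j g k) z))\<^sup>2)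
     = (\<Sum>z\<in>{1::nat,2} \<times> {..<n}. (se / n)\<^sup>2)"
    by (intro sum.cong) auto
  also have "\<dots> = 2 * se\<^sup>2 / n" using nn by (simp add: power2_eq_square)
  finally show "2 * se\<^sup>2 / n = (\<Sum>z\<in>{1::nat,2} \<times> {..<n}. (\<bar>(\<lambda>(g,k). (if g = 1 then 1 else -1) / real n) z\<bar> * eff_sd s3 s2 sg se ((\<lambda>(g,k). Eps i j g k) z))\<^sup>2)"
    by simp
qed


definition "Vv = 4 / (real N3 * real N2 * real n) * (se\<^sup>2 + real n * real N2 * sg\<^sup>2)"
definition "Dv \<omega> = (aT N3 Z \<omega> - aC N3 Z \<omega>) + (bT N3 N2 n Z \<omega> - bC N3 N2 n Z \<omega>)"

lemma Vv_pos: "Vv > 0"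
  using N3 N2 nn sd unfolding Vv_def by (intro mult_pos_pos add_pos_pos) auto

lemma D_dist: "distributed M lborel Dv (\<lambda>x. ennreal (normal_density 0 (sqrt Vv) x))"
proof -
  define A :: "(nat \<times> nat) set" where "A = {..<2*N3} \<times> {1::nat,2}"
  define B :: "(nat \<times> nat \<times> nat \<times> nat) set" where "B = {..<2*N3} \<times> {..<N2} \<times> {1::nat,2} \<times> {..<n}"
  define sT where "sT i = (if i < N3 then 1 else -1::real)" for i
  define sG where "sG g = (if g = (1::nat) then 1 else -1::real)" for g
  define \<iota> where "\<iota> = case_sum (\<lambda>(i,g). Vg i g) (\<lambda>(i,j,g,k). Eps i j g k)"
  define w :: "nat \<times> nat + nat \<times> nat \<times> nat \<times> nat \<Rightarrow> real" where "w = case_sum (\<lambda>(i,g). sT i * sG g / real N3) (\<lambda>(i,j,g,k). sT i * sG g / (real N3 * real N2 * real n))"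
  have absw: "\<bar>sT i * sG g\<bar> = 1" for i g by (simp add: sT_def sG_def)
  have hA: "(\<Sum>z\<in>A. w (Inl z) * Z (\<iota> (Inl z)) \<omega>) = aT N3 Z \<omega> - aC N3 Z \<omega>" for \<omega>
  proof -
    have "(\<Sum>z\<in>A. w (Inl z) * Z (\<iota> (Inl z)) \<omega>) = (\<Sum>i<2*N3. sT i * aa Z i \<omega> / real N3)"
      by (simp add: A_def sum.cartesian_product' w_def \<iota>_def sG_def aa_def field_simps)
    also have "\<dots> = aT N3 Z \<omega> - aC N3 Z \<omega>"
      unfolding split2 aT_def aC_def sum_divide_distrib
      by (simp add: sT_def sum_negf[symmetric])
    finally show ?thesis .
  qed
  have hB: "(\<Sum>z\<in>B. w (Inr z) * Z (\<iota> (Inr z)) \<omega>) = bT N3 N2 n Z \<omega> - bC N3 N2 n Z \<omega>" for \<omega>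
  proof -
    have inner: "(\<Sum>g\<in>{1::nat,2}. \<Sum>k<n. (sT i * sG g / (real N3 * real N2 * real n)) * Z (Eps i j g k) \<omega>)
        = sT i * bb n Z i j \<omega> / (real N3 * real N2)" for i j
    proof -
      have "(\<Sum>g\<in>{1::nat,2}. \<Sum>k<n. (sT i * sG g / (real N3 * real N2 * real n)) * Z (Eps i j g k) \<omega>)
        = (sT i / (real N3 * real N2 * real n)) * (\<Sum>k<n. Z (Eps i j 1 k) \<omega>)
          - (sT i / (real N3 * real N2 * real n)) * (\<Sum>k<n. Z (Eps i j 2 k) \<omega>)"
        by (simp add: sG_def sum_distrib_left sum_negf)
      also have "\<dots> = sT i * bb n Z i j \<omega> / (real N3 * real N2)"
        using nn unfolding bb_def eb_def by (simp add: divide_simps right_diff_distrib)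
      finally show ?thesis .
    qed
    have "(\<Sum>z\<in>B. w (Inr z) * Z (\<iota> (Inr z)) \<omega>) = (\<Sum>i<2*N3. \<Sum>j<N2. \<Sum>g\<in>{1::nat,2}. \<Sum>k<n. (sT i * sG g / (real N3 * real N2 * real n)) * Z (Eps i j g k) \<omega>)"
      by (simp only: B_def sum.cartesian_product' w_def \<iota>_def sum.simps(5,6) case_prod_conv)
    also have "\<dots> = (\<Sum>i<2*N3. \<Sum>j<N2. sT i * bb n Z i j \<omega> / (real N3 * real N2))"
      by (simp only: inner)
    also have "\<dots> = bT N3 N2 n Z \<omega> - bC N3 N2 n Z \<omega>"
      unfolding split2 bT_def bC_def sum_divide_distrib
      by (simp add: sT_def sum_negf[symmetric])
    finally show ?thesis .
  qed
  have fA: "finite A" and fB: "finite B" by (simp_all add: A_def B_def)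
  show ?thesis
  proof (rule lin_Z[where J="A <+> B" and \<iota>=\<iota> and w=w])
    show "finite (A <+> B)" by (simp add: A_def B_def)
    show "A <+> B \<noteq> {}" using N3 by (auto simp: A_def lessThan_empty_iff)
    show "inj_on \<iota> (A <+> B)" by (auto simp: inj_on_def \<iota>_def)
    show "\<iota> ` (A <+> B) \<subseteq> effects N3 N2 n" by (auto simp: \<iota>_def A_def B_def)
    show "w j \<noteq> 0" if "j \<in> A <+> B" for j
      using that N3 N2 nn by (auto simp: w_def sT_def sG_def split: if_splits)
    show "Dv \<omega> = (\<Sum>j\<in>A <+> B. w j * Z (\<iota> j) \<omega>)" for \<omega>
      using sum.Plus[of A B "\<lambda>j. w j * Z (\<iota> j) \<omega>"] by (simp add: A_def B_def Dv_def hA[symmetric] hB[symmetric] comp_def)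
    have "(\<Sum>j\<in>A <+> B. (\<bar>w j\<bar> * eff_sd s3 s2 sg se (\<iota> j))\<^sup>2)
       = (\<Sum>z\<in>A. (sg / N3)\<^sup>2) + (\<Sum>z\<in>B. (se / (real N3 * real N2 * real n))\<^sup>2)"
      unfolding sum.Plus[OF fA fB] comp_def
      apply (intro arg_cong2[where f="(+)"] sum.cong refl)
      using N3 N2 nn sd by (auto simp: A_def B_def w_def \<iota>_def abs_divide sT_def sG_def)
    also have "\<dots> = Vv"
      using N3 N2 nn by (simp add: A_def B_def Vv_def card_cartesian_product power2_eq_square field_simps)
    finally show "Vv = (\<Sum>j\<in>A <+> B. (\<bar>w j\<bar> * eff_sd s3 s2 sg se (\<iota> j))\<^sup>2)" by simp
  qed
qed

end


context mdl begin

lemma dm: "distributed M lborel X f \<Longrightarrow> X \<in> borel_measurable M"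
  using distributed_measurable[of M lborel X f] by simp

lemma aa_m: "i < 2*N3 \<Longrightarrow> aa Z i \<in> borel_measurable M" using dm[OF aa_dist] .
lemma bb_m: "i < 2*N3 \<Longrightarrow> j < N2 \<Longrightarrow> bb n Z i j \<in> borel_measurable M" using dm[OF bb_dist] .
lemma aT_m: "aT N3 Z \<in> borel_measurable M" using dm[OF aT_dist] .
lemma aC_m: "aC N3 Z \<in> borel_measurable M" using dm[OF aC_dist] .
lemma Dv_m: "Dv \<in> borel_measurable M" using dm[OF D_dist] .

lemma Qv_m: "Qv N3 Z \<in> borel_measurable M"
  unfolding Qv_def by (intro borel_measurable_divide borel_measurable_sum borel_measurable_power aa_m) auto

lemma Av_m: "Av N3 Z \<in> borel_measurable M"
  unfolding Av_def using Qv_m aT_m aC_m by measurable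

lemma Bv_m: "Bv N3 N2 n Z \<in> borel_measurable M"
  unfolding Bv_def by (intro borel_measurable_divide borel_measurable_sum borel_measurable_power bb_m) auto

lemma Ee_m: "Ee N3 N2 n Z \<in> borel_measurable M"
  unfolding Ee_def by (intro borel_measurable_divide borel_measurable_sum borel_measurable_power Zm) auto

lemma exp_sum1:
  assumes "\<And>i. i \<in> I \<Longrightarrow> integrable M (f i)"
  shows "integrable M (\<lambda>\<omega>. \<Sum>i\<in>I. f i \<omega>) \<and> expectation (\<lambda>\<omega>. \<Sum>i\<in>I. f i \<omega>) = (\<Sum>i\<in>I. expectation (f i))"
  using assms by (simp add: Bochner_Integration.integral_sum Bochner_Integration.integrable_sum)

lemma exp_sum2:
  assumes "\<And>i j. i \<in> I \<Longrightarrow> j \<in> J \<Longrightarrow> integrable M (f i j)"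
  shows "integrable M (\<lambda>\<omega>. \<Sum>i\<in>I. \<Sum>j\<in>J. f i j \<omega>) \<and> expectation (\<lambda>\<omega>. \<Sum>i\<in>I. \<Sum>j\<in>J. f i j \<omega>) = (\<Sum>i\<in>I. \<Sum>j\<in>J. expectation (f i j))"
proof -
  have "integrable M (\<lambda>\<omega>. \<Sum>j\<in>J. f i j \<omega>) \<and> expectation (\<lambda>\<omega>. \<Sum>j\<in>J. f i j \<omega>) = (\<Sum>j\<in>J. expectation (f i j))"
    if "i \<in> I" for i using exp_sum1[of J "f i"] assms that by blast
  then show ?thesis using exp_sum1[of I "\<lambda>i \<omega>. \<Sum>j\<in>J. f i j \<omega>"] by simp
qed

lemma exp_sum4:
  assumes "\<And>i j g k. i \<in> I \<Longrightarrow> j \<in> J \<Longrightarrow> g \<in> G \<Longrightarrow> k \<in> K \<Longrightarrow> integrable M (f i j g k)"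
  shows "integrable M (\<lambda>\<omega>. \<Sum>i\<in>I. \<Sum>j\<in>J. \<Sum>g\<in>G. \<Sum>k\<in>K. f i j g k \<omega>) \<and>
    expectation (\<lambda>\<omega>. \<Sum>i\<in>I. \<Sum>j\<in>J. \<Sum>g\<in>G. \<Sum>k\<in>K. f i j g k \<omega>) = (\<Sum>i\<in>I. \<Sum>j\<in>J. \<Sum>g\<in>G. \<Sum>k\<in>K. expectation (f i j g k))"
proof -
  have "integrable M (\<lambda>\<omega>. \<Sum>g\<in>G. \<Sum>k\<in>K. f i j g k \<omega>) \<and> expectation (\<lambda>\<omega>. \<Sum>g\<in>G. \<Sum>k\<in>K. f i j g k \<omega>) = (\<Sum>g\<in>G. \<Sum>k\<in>K. expectation (f i j g k))"
    if "i \<in> I" "j \<in> J" for i j using exp_sum2[of G K "f i j"] assms that by blast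
  then show ?thesis using exp_sum2[of I J "\<lambda>i j \<omega>. \<Sum>g\<in>G. \<Sum>k\<in>K. f i j g k \<omega>"] by simp
qed

lemma sq_mom: assumes "distributed M lborel X (\<lambda>x. ennreal (normal_density 0 (sqrt v) x))" "v > 0"
  shows "integrable M (\<lambda>\<omega>. (X \<omega>)\<^sup>2)" "expectation (\<lambda>\<omega>. (X \<omega>)\<^sup>2) = v"
  using normal_moments[OF assms(1)] assms(2) by auto

lemma aT_sq: "integrable M (\<lambda>\<omega>. (aT N3 Z \<omega>)\<^sup>2)" "expectation (\<lambda>\<omega>. (aT N3 Z \<omega>)\<^sup>2) = 2 * sg\<^sup>2 / N3"
  using sq_mom[OF aT_dist] sd N3 by auto

lemma aC_sq: "integrable M (\<lambda>\<omega>. (aC N3 Z \<omega>)\<^sup>2)" "expectation (\<lambda>\<omega>. (aC N3 Z \<omega>)\<^sup>2) = 2 * sg\<^sup>2 / N3"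
  using sq_mom[OF aC_dist] sd N3 by auto

lemma bb_sq: assumes "i < 2*N3" "j < N2"
  shows "integrable M (\<lambda>\<omega>. (bb n Z i j \<omega>)\<^sup>2)" "expectation (\<lambda>\<omega>. (bb n Z i j \<omega>)\<^sup>2) = 2 * se\<^sup>2 / n"
  using sq_mom[OF bb_dist[OF assms]] sd nn by auto

lemma Bv_sum: "integrable M (\<lambda>\<omega>. \<Sum>i<2*N3. \<Sum>j<N2. (bb n Z i j \<omega>)\<^sup>2) \<and>
   expectation (\<lambda>\<omega>. \<Sum>i<2*N3. \<Sum>j<N2. (bb n Z i j \<omega>)\<^sup>2) = (\<Sum>i<2*N3. \<Sum>j<N2. expectation (\<lambda>\<omega>. (bb n Z i j \<omega>)\<^sup>2))"
  by (rule exp_sum2) (simp add: bb_sq)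

lemma Bv_int: "integrable M (Bv N3 N2 n Z)"
  unfolding Bv_def using Bv_sum by simp

lemma Bv_exp: "expectation (Bv N3 N2 n Z) = se\<^sup>2 / n"
proof -
  have "expectation (Bv N3 N2 n Z) = (\<Sum>i<2*N3. \<Sum>j<N2. expectation (\<lambda>\<omega>. (bb n Z i j \<omega>)\<^sup>2)) / (4 * real N3 * real N2)"
    unfolding Bv_def using Bv_sum by simp
  also have "\<dots> = (\<Sum>i<2*N3. \<Sum>j<N2. 2 * se\<^sup>2 / n) / (4 * real N3 * real N2)"
    by (simp add: bb_sq)
  also have "\<dots> = se\<^sup>2 / n" using N3 N2 nn by (simp add: field_simps)
  finally show ?thesis .
qed

lemma Eps_sq: assumes "i < 2*N3" "j < N2" "g \<in> {1,2}" "k < n"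
  shows "integrable M (\<lambda>\<omega>. (Z (Eps i j g k) \<omega>)\<^sup>2)" "expectation (\<lambda>\<omega>. (Z (Eps i j g k) \<omega>)\<^sup>2) = se\<^sup>2"
  using normal_moments[OF Zd_Eps[OF assms]] sd by auto

lemma Ee_sum: "integrable M (\<lambda>\<omega>. \<Sum>i<2*N3. \<Sum>j<N2. \<Sum>g\<in>{1::nat,2}. \<Sum>k<n. (Z (Eps i j g k) \<omega>)\<^sup>2) \<and>
   expectation (\<lambda>\<omega>. \<Sum>i<2*N3. \<Sum>j<N2. \<Sum>g\<in>{1::nat,2}. \<Sum>k<n. (Z (Eps i j g k) \<omega>)\<^sup>2)
   = (\<Sum>i<2*N3. \<Sum>j<N2. \<Sum>g\<in>{1::nat,2}. \<Sum>k<n. expectation (\<lambda>\<omega>. (Z (Eps i j g k) \<omega>)\<^sup>2))"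
  by (rule exp_sum4) (simp add: Eps_sq)

lemma Ee_int: "integrable M (Ee N3 N2 n Z)"
  unfolding Ee_def using Ee_sum by simp

lemma Ee_exp: "expectation (Ee N3 N2 n Z) = real n * se\<^sup>2 / (real n - 1)"
proof -
  have "expectation (Ee N3 N2 n Z) = (\<Sum>i<2*N3. \<Sum>j<N2. \<Sum>g\<in>{1::nat,2}. \<Sum>k<n. expectation (\<lambda>\<omega>. (Z (Eps i j g k) \<omega>)\<^sup>2)) / (4 * real N3 * real N2 * (real n - 1))"
    unfolding Ee_def using Ee_sum by (simp only: integral_divide_zero)
  also have "\<dots> = (\<Sum>i<2*N3. \<Sum>j<N2. \<Sum>g\<in>{1::nat,2}. \<Sum>k<n. se\<^sup>2) / (4 * real N3 * real N2 * (real n - 1))"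
    by (intro arg_cong2[where f="(/)"] sum.cong refl) (simp add: Eps_sq)
  also have "\<dots> = real n * se\<^sup>2 / (real n - 1)" using N3 N2 nn by (simp add: field_simps)
  finally show ?thesis .
qed


lemma aa_mom: assumes "i < 2*N3"
  shows "integrable M (\<lambda>\<omega>. (aa Z i \<omega>)^k)" "expectation (\<lambda>\<omega>. (aa Z i \<omega>)\<^sup>2) = 2 * sg\<^sup>2"
    "expectation (\<lambda>\<omega>. (aa Z i \<omega>)^4) = 12 * sg^4"
proof -
  have s: "sqrt (2 * sg\<^sup>2) > 0" using sd by simp
  note m = normal_moments[OF aa_dist[OF assms] s]
  show "integrable M (\<lambda>\<omega>. (aa Z i \<omega>)^k)" by (rule m(1))
  show "expectation (\<lambda>\<omega>. (aa Z i \<omega>)\<^sup>2) = 2 * sg\<^sup>2" using m(2) by simp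
  have "(sqrt (2 * sg\<^sup>2))^4 = ((sqrt (2 * sg\<^sup>2))\<^sup>2)\<^sup>2" by (simp only: power_mult[symmetric]) simp
  also have "\<dots> = (2 * sg\<^sup>2)\<^sup>2" by simp
  also have "\<dots> = 4 * sg^4" by (simp add: power2_eq_square power4_eq_xxxx)
  finally have p4: "(sqrt (2 * sg\<^sup>2))^4 = 4 * sg^4" .
  show "expectation (\<lambda>\<omega>. (aa Z i \<omega>)^4) = 12 * sg^4" using m(3) unfolding p4 by simp
qed

definition "Wv i \<omega> = (aa Z i \<omega>)\<^sup>2 - 2 * sg\<^sup>2"

lemma Wv_indep: "indep_vars (\<lambda>_. borel) Wv {..<2*N3}"
proof -
  have i1: "indep_vars (\<lambda>i. PiM {Vg i 1, Vg i 2} (\<lambda>_. borel)) (\<lambda>i \<omega>. restrict (\<lambda>e. Z e \<omega>) {Vg i 1, Vg i 2}) {..<2*N3}"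
    by (intro indep_vars_restrict[OF ind]) (auto simp: disjoint_family_on_def)
  have i2: "indep_vars (\<lambda>_. borel) (\<lambda>i \<omega>. ((restrict (\<lambda>e. Z e \<omega>) {Vg i 1, Vg i 2}) (Vg i 1)
      - (restrict (\<lambda>e. Z e \<omega>) {Vg i 1, Vg i 2}) (Vg i 2))\<^sup>2 - 2 * sg\<^sup>2) {..<2*N3}"
    by (rule indep_vars_compose2[OF i1, where Y="\<lambda>i f. (f (Vg i 1) - f (Vg i 2))\<^sup>2 - 2 * sg\<^sup>2"]) measurable
  then show ?thesis by (simp add: Wv_def[abs_def] aa_def[abs_def])
qed

lemma Wv_mom: assumes "i < 2*N3"
  shows "integrable M (Wv i)" "integrable M (\<lambda>\<omega>. (Wv i \<omega>)\<^sup>2)" "expectation (Wv i) = 0"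
    "expectation (\<lambda>\<omega>. (Wv i \<omega>)\<^sup>2) = 8 * sg^4"
proof -
  note m = aa_mom[OF assms]
  have e: "(\<lambda>\<omega>. (Wv i \<omega>)\<^sup>2) = (\<lambda>\<omega>. (aa Z i \<omega>)^4 - 4 * sg\<^sup>2 * (aa Z i \<omega>)\<^sup>2 + 4 * sg^4)"
    by (simp add: Wv_def fun_eq_iff power2_eq_square power4_eq_xxxx algebra_simps)
  show "integrable M (Wv i)" unfolding Wv_def using m(1) by simp
  show "integrable M (\<lambda>\<omega>. (Wv i \<omega>)\<^sup>2)" unfolding e using m(1) by simp
  show "expectation (Wv i) = 0" unfolding Wv_def using m(1,2) prob_space by simp
  have "expectation (\<lambda>\<omega>. (aa Z i \<omega>)^4 - 4 * sg\<^sup>2 * (aa Z i \<omega>)\<^sup>2 + 4 * sg^4)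
     = expectation (\<lambda>\<omega>. (aa Z i \<omega>)^4) - 4 * sg\<^sup>2 * expectation (\<lambda>\<omega>. (aa Z i \<omega>)\<^sup>2) + 4 * sg^4"
    using m(1)[of 4] m(1)[of 2] prob_space by simp
  then show "expectation (\<lambda>\<omega>. (Wv i \<omega>)\<^sup>2) = 8 * sg^4" unfolding e using m(2,3)
    by (simp add: power2_eq_square power4_eq_xxxx)
qed

lemma Qv_L2: "integrable M (\<lambda>\<omega>. (Qv N3 Z \<omega> - sg\<^sup>2)\<^sup>2)"
    "expectation (\<lambda>\<omega>. (Qv N3 Z \<omega> - sg\<^sup>2)\<^sup>2) = sg^4 / N3"
proof -
  have e: "Qv N3 Z \<omega> - sg\<^sup>2 = (\<Sum>i<2*N3. Wv i \<omega>) / (4 * real N3)" for \<omega>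
    using N3 by (simp add: Qv_def Wv_def sum_subtractf field_simps)
  have e2: "(\<lambda>\<omega>. (Qv N3 Z \<omega> - sg\<^sup>2)\<^sup>2) = (\<lambda>\<omega>. (\<Sum>i<2*N3. Wv i \<omega>)\<^sup>2 / (4 * real N3)\<^sup>2)"
    by (simp add: e power_divide)
  note S = sum_sq_indep[OF _ Wv_indep, simplified, OF Wv_mom(1) Wv_mom(2) Wv_mom(3)]
  show "integrable M (\<lambda>\<omega>. (Qv N3 Z \<omega> - sg\<^sup>2)\<^sup>2)" unfolding e2 using S(1) by simp
  have "expectation (\<lambda>\<omega>. (Qv N3 Z \<omega> - sg\<^sup>2)\<^sup>2) = (\<Sum>i<2*N3. 8 * sg^4) / (4 * real N3)\<^sup>2"
    unfolding e2 using S(2) Wv_mom(4) by simp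
  also have "\<dots> = sg^4 / N3" using N3 by (simp add: power2_eq_square field_simps)
  finally show "expectation (\<lambda>\<omega>. (Qv N3 Z \<omega> - sg\<^sup>2)\<^sup>2) = sg^4 / N3" .
qed

end


lemma (in prob_space) pmono: "A \<subseteq> B \<Longrightarrow> B \<in> sets M \<Longrightarrow> measure M A \<le> measure M B"
  by (rule finite_measure_mono)

definition cip :: "('p \<Rightarrow> 'a measure) \<Rightarrow> 'p filter \<Rightarrow> ('p \<Rightarrow> 'a \<Rightarrow> real) \<Rightarrow> real \<Rightarrow> bool" where
  "cip M F X c \<longleftrightarrow> (\<forall>\<^sub>F p in F. prob_space (M p) \<and> X p \<in> borel_measurable (M p)) \<and>
     (\<forall>e>0. ((\<lambda>p. measure (M p) {\<omega>\<in>space (M p). e \<le> \<bar>X p \<omega> - c\<bar>}) \<longlongrightarrow> 0) F)"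

lemma cipD: "cip M F X c \<Longrightarrow> e > 0 \<Longrightarrow> ((\<lambda>p. measure (M p) {\<omega>\<in>space (M p). e \<le> \<bar>X p \<omega> - c\<bar>}) \<longlongrightarrow> 0) F"
  by (simp add: cip_def)

lemma cip_ev: "cip M F X c \<Longrightarrow> \<forall>\<^sub>F p in F. prob_space (M p) \<and> X p \<in> borel_measurable (M p)"
  by (simp add: cip_def)

lemma cip_L2:
  assumes ev: "\<forall>\<^sub>F p in F. prob_space (M p) \<and> X p \<in> borel_measurable (M p) \<and>
      integrable (M p) (\<lambda>\<omega>. (X p \<omega> - c)\<^sup>2) \<and> (\<integral>\<omega>. (X p \<omega> - c)\<^sup>2 \<partial>M p) \<le> h p"
    and h: "(h \<longlongrightarrow> 0) F"
  shows "cip M F X c"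
  unfolding cip_def
proof (intro conjI allI impI)
  show "\<forall>\<^sub>F p in F. prob_space (M p) \<and> X p \<in> borel_measurable (M p)"
    using ev by (rule eventually_mono) auto
  fix e :: real assume e: "e > 0"
  show "((\<lambda>p. measure (M p) {\<omega>\<in>space (M p). e \<le> \<bar>X p \<omega> - c\<bar>}) \<longlongrightarrow> 0) F"
  proof (rule tendsto_sandwich[where f="\<lambda>_. 0" and h="\<lambda>p. h p / e\<^sup>2"])
    show "\<forall>\<^sub>F p in F. 0 \<le> measure (M p) {\<omega>\<in>space (M p). e \<le> \<bar>X p \<omega> - c\<bar>}" by simp
    show "\<forall>\<^sub>F p in F. measure (M p) {\<omega>\<in>space (M p). e \<le> \<bar>X p \<omega> - c\<bar>} \<le> h p / e\<^sup>2"
      using ev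
    proof (rule eventually_mono, elim conjE)
      fix p assume ps: "prob_space (M p)" and m: "X p \<in> borel_measurable (M p)"
        and i: "integrable (M p) (\<lambda>\<omega>. (X p \<omega> - c)\<^sup>2)" and le: "(\<integral>\<omega>. (X p \<omega> - c)\<^sup>2 \<partial>M p) \<le> h p"
      have eq: "{\<omega>\<in>space (M p). e \<le> \<bar>X p \<omega> - c\<bar>} = {\<omega>\<in>space (M p). e\<^sup>2 \<le> (X p \<omega> - c)\<^sup>2}"
        using e by (auto simp: abs_le_square_iff[symmetric])
      have "measure (M p) {\<omega>\<in>space (M p). e\<^sup>2 \<le> (X p \<omega> - c)\<^sup>2} \<le> (\<integral>\<omega>. (X p \<omega> - c)\<^sup>2 \<partial>M p) / e\<^sup>2"
        by (rule integral_Markov_inequality_measure[OF i]) (use e in auto)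
      also have "\<dots> \<le> h p / e\<^sup>2" using le by (simp add: divide_right_mono)
      finally show "measure (M p) {\<omega>\<in>space (M p). e \<le> \<bar>X p \<omega> - c\<bar>} \<le> h p / e\<^sup>2" unfolding eq .
    qed
    show "((\<lambda>_. 0) \<longlongrightarrow> (0::real)) F" by simp
    show "((\<lambda>p. h p / e\<^sup>2) \<longlongrightarrow> 0) F" using tendsto_divide_zero[OF h, of "e\<^sup>2"] by simp
  qed
qed

lemma cip_L1:
  assumes ev: "\<forall>\<^sub>F p in F. prob_space (M p) \<and> X p \<in> borel_measurable (M p) \<and>
      integrable (M p) (X p) \<and> (\<forall>\<omega>\<in>space (M p). 0 \<le> X p \<omega>) \<and> (\<integral>\<omega>. X p \<omega> \<partial>M p) \<le> h p"
    and h: "(h \<longlongrightarrow> 0) F"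
  shows "cip M F X 0"
  unfolding cip_def
proof (intro conjI allI impI)
  show "\<forall>\<^sub>F p in F. prob_space (M p) \<and> X p \<in> borel_measurable (M p)"
    using ev by (rule eventually_mono) auto
  fix e :: real assume e: "e > 0"
  show "((\<lambda>p. measure (M p) {\<omega>\<in>space (M p). e \<le> \<bar>X p \<omega> - 0\<bar>}) \<longlongrightarrow> 0) F"
  proof (rule tendsto_sandwich[where f="\<lambda>_. 0" and h="\<lambda>p. h p / e"])
    show "\<forall>\<^sub>F p in F. 0 \<le> measure (M p) {\<omega>\<in>space (M p). e \<le> \<bar>X p \<omega> - 0\<bar>}" by simp
    show "\<forall>\<^sub>F p in F. measure (M p) {\<omega>\<in>space (M p). e \<le> \<bar>X p \<omega> - 0\<bar>} \<le> h p / e"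
      using ev
    proof (rule eventually_mono, elim conjE)
      fix p assume ps: "prob_space (M p)" and m: "X p \<in> borel_measurable (M p)"
        and i: "integrable (M p) (X p)" and nn: "\<forall>\<omega>\<in>space (M p). 0 \<le> X p \<omega>" and le: "(\<integral>\<omega>. X p \<omega> \<partial>M p) \<le> h p"
      have eq: "{\<omega>\<in>space (M p). e \<le> \<bar>X p \<omega> - 0\<bar>} = {\<omega>\<in>space (M p). e \<le> X p \<omega>}"
        using nn by auto
      have "measure (M p) {\<omega>\<in>space (M p). e \<le> X p \<omega>} \<le> (\<integral>\<omega>. X p \<omega> \<partial>M p) / e"
        by (rule integral_Markov_inequality_measure[OF i]) (use e nn in auto)
      also have "\<dots> \<le> h p / e" using le e by (simp add: divide_right_mono)
      finally show "measure (M p) {\<omega>\<in>space (M p). e \<le> \<bar>X p \<omega> - 0\<bar>} \<le> h p / e" unfolding eq .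
    qed
    show "((\<lambda>_. 0) \<longlongrightarrow> (0::real)) F" by simp
    show "((\<lambda>p. h p / e) \<longlongrightarrow> 0) F" using tendsto_divide_zero[OF h, of "e"] by simp
  qed
qed

lemma cip_det:
  assumes ev: "\<forall>\<^sub>F p in F. prob_space (M p)" and f: "(f \<longlongrightarrow> c) F"
  shows "cip M F (\<lambda>p \<omega>. f p) c"
  unfolding cip_def
proof (intro conjI allI impI)
  show "\<forall>\<^sub>F p in F. prob_space (M p) \<and> (\<lambda>\<omega>. f p) \<in> borel_measurable (M p)"
    using ev by (rule eventually_mono) auto
  fix e :: real assume e: "e > 0"
  have "\<forall>\<^sub>F p in F. dist (f p) c < e" using tendstoD[OF f e] .
  then have "\<forall>\<^sub>F p in F. measure (M p) {\<omega>\<in>space (M p). e \<le> \<bar>f p - c\<bar>} = 0"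
    by (rule eventually_mono) (auto simp: dist_real_def)
  then show "((\<lambda>p. measure (M p) {\<omega>\<in>space (M p). e \<le> \<bar>f p - c\<bar>}) \<longlongrightarrow> 0) F"
    by (rule tendsto_eventually)
qed

lemma cip_cont2:
  assumes X: "cip M F X a" and Y: "cip M F Y b"
    and g: "isCont (\<lambda>z. g (fst z) (snd z)) (a, b)"
    and gm: "\<forall>\<^sub>F p in F. (\<lambda>\<omega>. g (X p \<omega>) (Y p \<omega>)) \<in> borel_measurable (M p)"
  shows "cip M F (\<lambda>p \<omega>. g (X p \<omega>) (Y p \<omega>)) (g a b)"
  unfolding cip_def
proof (intro conjI allI impI)
  show "\<forall>\<^sub>F p in F. prob_space (M p) \<and> (\<lambda>\<omega>. g (X p \<omega>) (Y p \<omega>)) \<in> borel_measurable (M p)"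
    using cip_ev[OF X] gm by eventually_elim auto
  fix e :: real assume e: "e > 0"
  obtain d where d: "d > 0" and dd: "\<And>z. dist z (a, b) < d \<Longrightarrow> dist (g (fst z) (snd z)) (g a b) < e"
    using g e unfolding continuous_at_eps_delta by fastforce
  have sub: "{\<omega>\<in>space (M p). e \<le> \<bar>g (X p \<omega>) (Y p \<omega>) - g a b\<bar>}
      \<subseteq> {\<omega>\<in>space (M p). d/2 \<le> \<bar>X p \<omega> - a\<bar>} \<union> {\<omega>\<in>space (M p). d/2 \<le> \<bar>Y p \<omega> - b\<bar>}" for p
  proof safe
    fix \<omega> assume "\<omega> \<in> space (M p)" "e \<le> \<bar>g (X p \<omega>) (Y p \<omega>) - g a b\<bar>" "\<not> d / 2 \<le> \<bar>Y p \<omega> - b\<bar>"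
    moreover have "\<not> d / 2 \<le> \<bar>X p \<omega> - a\<bar> \<Longrightarrow> \<not> d / 2 \<le> \<bar>Y p \<omega> - b\<bar> \<Longrightarrow> dist (X p \<omega>, Y p \<omega>) (a, b) < d"
    proof -
      assume "\<not> d / 2 \<le> \<bar>X p \<omega> - a\<bar>" "\<not> d / 2 \<le> \<bar>Y p \<omega> - b\<bar>"
      then have "sqrt ((dist (X p \<omega>) a)\<^sup>2 + (dist (Y p \<omega>) b)\<^sup>2) \<le> dist (X p \<omega>) a + dist (Y p \<omega>) b"
        and "dist (X p \<omega>) a + dist (Y p \<omega>) b < d"
        by (auto intro!: real_le_lsqrt simp: dist_real_def power2_eq_square algebra_simps)
      then show ?thesis by (simp add: dist_Pair_Pair)
    qed
    ultimately show "d / 2 \<le> \<bar>X p \<omega> - a\<bar>"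
      using dd[of "(X p \<omega>, Y p \<omega>)"] by (force simp: dist_real_def)
  qed
  show "((\<lambda>p. measure (M p) {\<omega>\<in>space (M p). e \<le> \<bar>g (X p \<omega>) (Y p \<omega>) - g a b\<bar>}) \<longlongrightarrow> 0) F"
  proof (rule tendsto_sandwich[where f="\<lambda>_. 0"])
    show "\<forall>\<^sub>F p in F. 0 \<le> measure (M p) {\<omega>\<in>space (M p). e \<le> \<bar>g (X p \<omega>) (Y p \<omega>) - g a b\<bar>}" by simp
    show "\<forall>\<^sub>F p in F. measure (M p) {\<omega>\<in>space (M p). e \<le> \<bar>g (X p \<omega>) (Y p \<omega>) - g a b\<bar>}
       \<le> measure (M p) {\<omega>\<in>space (M p). d/2 \<le> \<bar>X p \<omega> - a\<bar>} + measure (M p) {\<omega>\<in>space (M p). d/2 \<le> \<bar>Y p \<omega> - b\<bar>}"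
      using cip_ev[OF X] cip_ev[OF Y]
    proof eventually_elim
      case (elim p)
      then have mX: "X p \<in> borel_measurable (M p)" and mY: "Y p \<in> borel_measurable (M p)"
        and ps: "prob_space (M p)" by auto
      have s1: "{\<omega>\<in>space (M p). d/2 \<le> \<bar>X p \<omega> - a\<bar>} \<in> sets (M p)" using mX by measurable
      have s2: "{\<omega>\<in>space (M p). d/2 \<le> \<bar>Y p \<omega> - b\<bar>} \<in> sets (M p)" using mY by measurable
      show ?case
        using prob_space.pmono[OF ps sub sets.Un[OF s1 s2]] measure_Un_le[OF s1 s2] by linarith
    qed
    show "((\<lambda>_. 0) \<longlongrightarrow> (0::real)) F" by simp
    show "((\<lambda>p. measure (M p) {\<omega>\<in>space (M p). d/2 \<le> \<bar>X p \<omega> - a\<bar>} + measure (M p) {\<omega>\<in>space (M p). d/2 \<le> \<bar>Y p \<omega> - b\<bar>}) \<longlongrightarrow> 0) F"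
      using tendsto_add[OF cipD[OF X, of "d/2"] cipD[OF Y, of "d/2"]] d by simp
  qed
qed

lemma cip_sandwich:
  assumes L: "cip M F L c" and U: "cip M F U c"
    and ev: "\<forall>\<^sub>F p in F. X p \<in> borel_measurable (M p) \<and> (\<forall>\<omega>\<in>space (M p). L p \<omega> \<le> X p \<omega> \<and> X p \<omega> \<le> U p \<omega>)"
  shows "cip M F X c"
  unfolding cip_def
proof (intro conjI allI impI)
  show "\<forall>\<^sub>F p in F. prob_space (M p) \<and> X p \<in> borel_measurable (M p)"
    using cip_ev[OF L] ev by eventually_elim auto
  fix e :: real assume e: "e > 0"
  show "((\<lambda>p. measure (M p) {\<omega>\<in>space (M p). e \<le> \<bar>X p \<omega> - c\<bar>}) \<longlongrightarrow> 0) F"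
  proof (rule tendsto_sandwich[where f="\<lambda>_. 0"])
    show "\<forall>\<^sub>F p in F. 0 \<le> measure (M p) {\<omega>\<in>space (M p). e \<le> \<bar>X p \<omega> - c\<bar>}" by simp
    show "\<forall>\<^sub>F p in F. measure (M p) {\<omega>\<in>space (M p). e \<le> \<bar>X p \<omega> - c\<bar>}
       \<le> measure (M p) {\<omega>\<in>space (M p). e \<le> \<bar>L p \<omega> - c\<bar>} + measure (M p) {\<omega>\<in>space (M p). e \<le> \<bar>U p \<omega> - c\<bar>}"
      using cip_ev[OF L] cip_ev[OF U] ev
    proof eventually_elim
      case (elim p)
      then have mX: "L p \<in> borel_measurable (M p)" and mY: "U p \<in> borel_measurable (M p)"
        and ps: "prob_space (M p)" by auto
      have sub: "{\<omega>\<in>space (M p). e \<le> \<bar>X p \<omega> - c\<bar>} \<subseteq> {\<omega>\<in>space (M p). e \<le> \<bar>L p \<omega> - c\<bar>} \<union> {\<omega>\<in>space (M p). e \<le> \<bar>U p \<omega> - c\<bar>}"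
        using elim by fastforce
      have s1: "{\<omega>\<in>space (M p). e \<le> \<bar>L p \<omega> - c\<bar>} \<in> sets (M p)" using mX by measurable
      have s2: "{\<omega>\<in>space (M p). e \<le> \<bar>U p \<omega> - c\<bar>} \<in> sets (M p)" using mY by measurable
      show ?case
        using prob_space.pmono[OF ps sub sets.Un[OF s1 s2]] measure_Un_le[OF s1 s2] by linarith
    qed
    show "((\<lambda>_. 0) \<longlongrightarrow> (0::real)) F" by simp
    show "((\<lambda>p. measure (M p) {\<omega>\<in>space (M p). e \<le> \<bar>L p \<omega> - c\<bar>} + measure (M p) {\<omega>\<in>space (M p). e \<le> \<bar>U p \<omega> - c\<bar>}) \<longlongrightarrow> 0) F"
      using tendsto_add[OF cipD[OF L e] cipD[OF U e]] by simp
  qed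
qed


lemma Phi_cont: "isCont Phi x"
proof -
  have "emeasure (density lborel (\<lambda>t. ennreal (std_normal_density t))) {x} = 0"
    by (subst emeasure_density) (auto intro!: nn_integral_null_set)
  then have "measure std_normal_distribution {x} = 0"
    by (simp add: measure_def)
  then have "isCont (cdf std_normal_distribution) x"
  proof -
    interpret real_distribution std_normal_distribution by (rule real_dist_normal_dist)
    show ?thesis using isCont_cdf \<open>measure std_normal_distribution {x} = 0\<close> by blast
  qed
  moreover have "cdf std_normal_distribution = Phi"
    by (simp add: fun_eq_iff cdf_def Phi_def)
  ultimately show ?thesis by simp
qed

lemma sqrt_dev: assumes "r \<ge> 0" shows "\<bar>sqrt r - 1\<bar> \<le> \<bar>r - 1\<bar>"
proof -
  define s where "s = sqrt r"
  have s0: "s \<ge> 0" and r: "r = s * s" using assms by (auto simp: s_def)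
  have f: "s * s - 1 = (s - 1) * (s + 1)" by (simp add: algebra_simps)
  have "\<bar>s * s - 1\<bar> = \<bar>s - 1\<bar> * (s + 1)" using s0 unfolding f abs_mult by simp
  also have "\<dots> \<ge> \<bar>s - 1\<bar>" using s0 by (simp add: mult_le_cancel_left1)
  finally show ?thesis unfolding r s_def[symmetric] by simp
qed

lemma final_step:
  fixes M :: "'p \<Rightarrow> 'a measure"
  assumes cR: "cip M F R 1"
    and ev: "\<forall>\<^sub>F p in F. W p \<in> borel_measurable (M p) \<and> (\<forall>t. measure (M p) {\<omega>\<in>space (M p). W p \<omega> \<le> t} = Phi t)"
  shows "((\<lambda>p. measure (M p) {\<omega>\<in>space (M p). 0 < R p \<omega> \<and> W p \<omega> / sqrt (R p \<omega>) \<le> x}) \<longlongrightarrow> Phi x) F"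
proof (rule tendstoI)
  fix e :: real assume e: "e > 0"
  then have e2: "e/2 > 0" by simp
  obtain d where d: "d > 0" and dd: "\<And>t. dist t x < d \<Longrightarrow> dist (Phi t) (Phi x) < e/2"
    using Phi_cont[of x, unfolded continuous_at_eps_delta] e2 by blast
  define \<epsilon> where "\<epsilon> = min (1/2) (d / (2 * (\<bar>x\<bar> + 1)))"
  have \<epsilon>: "\<epsilon> > 0" "\<epsilon> \<le> 1/2" using d unfolding \<epsilon>_def by (simp_all add: min_def)
  have \<epsilon>3: "\<bar>x\<bar> * \<epsilon> \<le> d/2"
  proof -
    have "\<bar>x\<bar> * \<epsilon> \<le> \<bar>x\<bar> * (d / (2 * (\<bar>x\<bar> + 1)))" unfolding \<epsilon>_def by (intro mult_left_mono) auto
    also have "\<dots> = (d/2) * (\<bar>x\<bar> / (\<bar>x\<bar> + 1))" by (simp add: field_simps)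
    also have "\<dots> \<le> d/2" using d by (intro mult_left_le) auto
    finally show ?thesis .
  qed
  have bad: "\<forall>\<^sub>F p in F. measure (M p) {\<omega>\<in>space (M p). \<epsilon> \<le> \<bar>R p \<omega> - 1\<bar>} < e/2"
    using tendstoD[OF cipD[OF cR \<epsilon>(1)] e2] by (rule eventually_mono) (simp add: dist_real_def)
  have hi: "\<bar>Phi (x + d/2) - Phi x\<bar> < e/2" using dd[of "x + d/2"] d by (simp add: dist_real_def)
  have lo: "\<bar>Phi (x - d/2) - Phi x\<bar> < e/2" using dd[of "x - d/2"] d by (simp add: dist_real_def)
  show "\<forall>\<^sub>F p in F. dist (measure (M p) {\<omega>\<in>space (M p). 0 < R p \<omega> \<and> W p \<omega> / sqrt (R p \<omega>) \<le> x}) (Phi x) < e"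
    using bad ev cip_ev[OF cR]
  proof eventually_elim
    case (elim p)
    then have ps: "prob_space (M p)" and Rm: "R p \<in> borel_measurable (M p)" and Wm: "W p \<in> borel_measurable (M p)"
      and Ph: "\<And>t. measure (M p) {\<omega>\<in>space (M p). W p \<omega> \<le> t} = Phi t"
      and b: "measure (M p) {\<omega>\<in>space (M p). \<epsilon> \<le> \<bar>R p \<omega> - 1\<bar>} < e/2" by auto
    define E where "E = {\<omega>\<in>space (M p). 0 < R p \<omega> \<and> W p \<omega> / sqrt (R p \<omega>) \<le> x}"
    define Gc where "Gc = {\<omega>\<in>space (M p). \<epsilon> \<le> \<bar>R p \<omega> - 1\<bar>}"
    define Ah where "Ah = {\<omega>\<in>space (M p). W p \<omega> \<le> x + d/2}"
    define Al where "Al = {\<omega>\<in>space (M p). W p \<omega> \<le> x - d/2}"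
    have sE: "E \<in> sets (M p)" unfolding E_def using Rm Wm by measurable
    have sG: "Gc \<in> sets (M p)" unfolding Gc_def using Rm by measurable
    have sh: "Ah \<in> sets (M p)" unfolding Ah_def using Wm by measurable
    have sl: "Al \<in> sets (M p)" unfolding Al_def using Wm by measurable
    have good: "0 < R p \<omega> \<and> \<bar>x * sqrt (R p \<omega>) - x\<bar> \<le> d/2" if "\<bar>R p \<omega> - 1\<bar> < \<epsilon>" for \<omega>
    proof
      show "0 < R p \<omega>" using that \<epsilon> by auto
      have "\<bar>x * sqrt (R p \<omega>) - x\<bar> = \<bar>x\<bar> * \<bar>sqrt (R p \<omega>) - 1\<bar>" by (simp add: abs_mult[symmetric] algebra_simps)
      also have "\<dots> \<le> \<bar>x\<bar> * \<bar>R p \<omega> - 1\<bar>" using sqrt_dev[of "R p \<omega>"] \<open>0 < R p \<omega>\<close> by (simp add: mult_left_mono)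
      also have "\<dots> \<le> \<bar>x\<bar> * \<epsilon>" using that by (simp add: mult_left_mono)
      finally show "\<bar>x * sqrt (R p \<omega>) - x\<bar> \<le> d/2" using \<epsilon>3 by simp
    qed
    have iff: "W p \<omega> / sqrt (R p \<omega>) \<le> x \<longleftrightarrow> W p \<omega> \<le> x * sqrt (R p \<omega>)" if "0 < R p \<omega>" for \<omega>
      using that by (simp add: divide_le_eq)
    have sub1: "E \<subseteq> Ah \<union> Gc"
    proof
      fix \<omega> assume "\<omega> \<in> E"
      then have sp: "\<omega> \<in> space (M p)" and R0: "0 < R p \<omega>" and le: "W p \<omega> / sqrt (R p \<omega>) \<le> x"
        unfolding E_def by auto
      show "\<omega> \<in> Ah \<union> Gc"
      proof (cases "\<epsilon> \<le> \<bar>R p \<omega> - 1\<bar>")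
        case True then show ?thesis using sp unfolding Gc_def by auto
      next
        case False
        then have g: "\<bar>x * sqrt (R p \<omega>) - x\<bar> \<le> d/2" using good[of \<omega>] by auto
        have "W p \<omega> \<le> x * sqrt (R p \<omega>)" using iff[OF R0] le by simp
        then have "W p \<omega> \<le> x + d/2" using g by linarith
        then show ?thesis using sp unfolding Ah_def by auto
      qed
    qed
    have sub2: "Al \<subseteq> E \<union> Gc"
    proof
      fix \<omega> assume "\<omega> \<in> Al"
      then have sp: "\<omega> \<in> space (M p)" and le: "W p \<omega> \<le> x - d/2"
        unfolding Al_def by auto
      show "\<omega> \<in> E \<union> Gc"
      proof (cases "\<epsilon> \<le> \<bar>R p \<omega> - 1\<bar>")
        case True then show ?thesis using sp unfolding Gc_def by auto
      next
        case False
        then have g: "\<bar>x * sqrt (R p \<omega>) - x\<bar> \<le> d/2" and R0: "0 < R p \<omega>" using good[of \<omega>] by auto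
        have "W p \<omega> \<le> x * sqrt (R p \<omega>)" using g le by linarith
        then have "W p \<omega> / sqrt (R p \<omega>) \<le> x" using iff[OF R0] by simp
        then show ?thesis using sp R0 unfolding E_def by auto
      qed
    qed
    have u: "measure (M p) E \<le> Phi (x + d/2) + measure (M p) Gc"
      using prob_space.pmono[OF ps sub1 sets.Un[OF sh sG]] measure_Un_le[OF sh sG] Ph[of "x + d/2"]
      unfolding Ah_def by linarith
    have l: "Phi (x - d/2) \<le> measure (M p) E + measure (M p) Gc"
      using prob_space.pmono[OF ps sub2 sets.Un[OF sE sG]] measure_Un_le[OF sE sG] Ph[of "x - d/2"]
      unfolding Al_def by linarith
    have "measure (M p) Gc < e/2" using b by (simp add: Gc_def)
    moreover have "measure (M p) Gc \<ge> 0" by simp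
    ultimately show ?case using u l hi lo unfolding E_def[symmetric] dist_real_def by linarith
  qed
qed

context mdl begin

lemma ps: "prob_space M" using me by (simp add: model_effects_def)

lemma eb_m: "i < 2*N3 \<Longrightarrow> j < N2 \<Longrightarrow> g \<in> {1,2} \<Longrightarrow> eb n Z i j g \<in> borel_measurable M"
  unfolding eb_def[abs_def] by (intro borel_measurable_divide borel_measurable_sum Zm) auto

lemma bT_m: "bT N3 N2 n Z \<in> borel_measurable M"
  unfolding bT_def[abs_def] by (intro borel_measurable_divide borel_measurable_sum bb_m) auto

lemma bC_m: "bC N3 N2 n Z \<in> borel_measurable M"
  unfolding bC_def[abs_def] by (intro borel_measurable_divide borel_measurable_sum bb_m) auto

abbreviation "YYo b0 tau xi dl \<omega> \<equiv> Yobs b0 tau xi dl N3 Z \<omega>"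

lemma pos3: "N3 > 0" "N2 > 0" "n > 0" using N3 N2 nn by auto

lemma sige_m: "(\<lambda>\<omega>. sigma_e_hat2 N3 N2 n (YYo b0 tau xi dl \<omega>)) \<in> borel_measurable M"
  unfolding sigma_e_hat2_def SS0_eq[OF pos3]
  by (intro borel_measurable_divide borel_measurable_sum borel_measurable_power borel_measurable_diff Zm eb_m) auto

lemma S1_m: "(\<lambda>\<omega>. SS1 N3 N2 n (YYo b0 tau xi dl \<omega>) / (4 * real N3 * real N2 * real n)) \<in> borel_measurable M"
  unfolding SS1_eq[OF pos3]
  by (intro borel_measurable_divide borel_measurable_times borel_measurable_const borel_measurable_add
      borel_measurable_sum borel_measurable_power borel_measurable_diff aa_m bb_m aT_m aC_m bT_m bC_m) auto

definition "Rv b0 tau xi dl \<omega> = var_hat N3 N2 n (YYo b0 tau xi dl \<omega>) / Vv"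

lemma Rv_eq: "Rv b0 tau xi dl \<omega> =
     (sigma_e_hat2 N3 N2 n (YYo b0 tau xi dl \<omega>) * (1 - real N2) / (real n * real N2)
      + SS1 N3 N2 n (YYo b0 tau xi dl \<omega>) / (4 * real N3 * real N2 * real n))
     / (se\<^sup>2 / (real n * real N2) + sg\<^sup>2)"
  unfolding Rv_def Vv_def using var_hat_ratio[OF pos3 sd(4) sd(3)] by simp

lemma Rv_m: "Rv b0 tau xi dl \<in> borel_measurable M"
proof -
  have "(\<lambda>\<omega>. (sigma_e_hat2 N3 N2 n (YYo b0 tau xi dl \<omega>) * (1 - real N2) / (real n * real N2)
      + SS1 N3 N2 n (YYo b0 tau xi dl \<omega>) / (4 * real N3 * real N2 * real n))
     / (se\<^sup>2 / (real n * real N2) + sg\<^sup>2)) \<in> borel_measurable M"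
    using sige_m[of b0 tau xi dl] S1_m[of b0 tau xi dl] by measurable
  then show ?thesis unfolding Rv_eq[abs_def] .
qed

definition "Wv' \<omega> = Dv \<omega> / sqrt Vv"

lemma W_dist: "distributed M lborel Wv' (\<lambda>x. ennreal (std_normal_density x))"
proof -
  have sV: "sqrt Vv > 0" using Vv_pos by simp
  have "distributed M lborel (\<lambda>\<omega>. 0 + (1 / sqrt Vv) * Dv \<omega>) (\<lambda>x. ennreal (normal_density (0 + (1 / sqrt Vv) * 0) (\<bar>1 / sqrt Vv\<bar> * sqrt Vv) x))"
    by (rule normal_density_affine[OF D_dist sV]) (use sV in simp)
  then show ?thesis using sV by (simp add: Wv'_def[abs_def])
qed

lemma Wv'_m: "Wv' \<in> borel_measurable M" using dm[OF W_dist] .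

lemma W_Phi: "measure M {\<omega>\<in>space M. Wv' \<omega> \<le> t} = Phi t"
proof -
  have "measure M {\<omega>\<in>space M. Wv' \<omega> \<le> t} = measure (distr M lborel Wv') {..t}"
    using Wv'_m by (subst measure_distr) (auto simp: vimage_def Int_def conj_commute)
  also have "\<dots> = Phi t"
    unfolding distributed_distr_eq_density[OF W_dist] Phi_def ..
  finally show ?thesis .
qed

lemma event_eq:
  "{\<omega> \<in> space M. var_hat N3 N2 n (YYo b0 tau xi dl \<omega>) > 0 \<and> T_stat dl N3 N2 n (YYo b0 tau xi dl \<omega>) \<le> x}
   = {\<omega> \<in> space M. 0 < Rv b0 tau xi dl \<omega> \<and> Wv' \<omega> / sqrt (Rv b0 tau xi dl \<omega>) \<le> x}"
proof -
  have V: "Vv > 0" using Vv_pos .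
  have vh: "var_hat N3 N2 n (YYo b0 tau xi dl \<omega>) = Vv * Rv b0 tau xi dl \<omega>" for \<omega>
    using V by (simp add: Rv_def)
  have T: "T_stat dl N3 N2 n (YYo b0 tau xi dl \<omega>) = Wv' \<omega> / sqrt (Rv b0 tau xi dl \<omega>)" for \<omega>
    unfolding T_stat_def delta_hat_eq[OF pos3] vh Wv'_def Dv_def
    by (simp add: real_sqrt_mult divide_divide_eq_left mult.commute)
  show ?thesis using V by (auto simp: vh T zero_less_mult_iff)
qed

end

lemma cip_cont2':
  assumes X: "cip M F X a" and Y: "cip M F Y b"
    and g: "isCont (\<lambda>z. g (fst z) (snd z)) (a, b)"
    and gm: "(\<lambda>z::real\<times>real. g (fst z) (snd z)) \<in> borel_measurable borel"
  shows "cip M F (\<lambda>p \<omega>. g (X p \<omega>) (Y p \<omega>)) (g a b)"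
proof (rule cip_cont2[OF X Y g])
  show "\<forall>\<^sub>F p in F. (\<lambda>\<omega>. g (X p \<omega>) (Y p \<omega>)) \<in> borel_measurable (M p)"
    using cip_ev[OF X] cip_ev[OF Y]
  proof eventually_elim
    case (elim p)
    then have "(\<lambda>\<omega>. (X p \<omega>, Y p \<omega>)) \<in> measurable (M p) (borel \<Otimes>\<^sub>M borel)"
      by (intro measurable_Pair) auto
    then have "(\<lambda>\<omega>. (X p \<omega>, Y p \<omega>)) \<in> measurable (M p) borel" by (simp add: borel_prod)
    from measurable_compose[OF this gm] show ?case by simp
  qed
qed

lemma cip_cong:
  assumes X: "cip M F X c"
    and ev: "\<forall>\<^sub>F p in F. (\<forall>\<omega>\<in>space (M p). Y p \<omega> = X p \<omega>) \<and> Y p \<in> borel_measurable (M p)"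
  shows "cip M F Y c"
  unfolding cip_def
proof (intro conjI allI impI)
  show "\<forall>\<^sub>F p in F. prob_space (M p) \<and> Y p \<in> borel_measurable (M p)"
    using cip_ev[OF X] ev by eventually_elim auto
  fix e :: real assume e: "e > 0"
  have E: "\<forall>\<^sub>F p in F. measure (M p) {\<omega>\<in>space (M p). e \<le> \<bar>X p \<omega> - c\<bar>} = measure (M p) {\<omega>\<in>space (M p). e \<le> \<bar>Y p \<omega> - c\<bar>}"
    using ev by eventually_elim (intro arg_cong[where f="measure _"], auto)
  show "((\<lambda>p. measure (M p) {\<omega>\<in>space (M p). e \<le> \<bar>Y p \<omega> - c\<bar>}) \<longlongrightarrow> 0) F"
    by (rule tendsto_cong[THEN iffD1, OF E cipD[OF X e]])
qed

abbreviation FF :: "(nat \<times> nat \<times> nat) filter" where "FF \<equiv> at_top \<times>\<^sub>F (at_top \<times>\<^sub>F at_top)"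

lemma lim_fst: "((\<lambda>p. c / real (fst p)) \<longlongrightarrow> 0) FF"
proof -
  have "filterlim (\<lambda>p::nat\<times>nat\<times>nat. real (fst p)) at_top FF"
    by (rule filterlim_compose[OF filterlim_real_sequentially filterlim_fst[of sequentially "sequentially \<times>\<^sub>F sequentially"]])
  then show ?thesis by (intro tendsto_divide_0[OF tendsto_const] filterlim_at_top_imp_at_infinity)
qed

lemma lim_n: "((\<lambda>p. c / real (snd (snd p))) \<longlongrightarrow> 0) FF"
proof -
  have "filterlim (\<lambda>p::nat\<times>nat\<times>nat. real (snd (snd p))) at_top FF"
    by (rule filterlim_compose[OF filterlim_real_sequentially filterlim_compose[OF filterlim_snd[of sequentially sequentially] filterlim_snd[of "sequentially \<times>\<^sub>F sequentially" sequentially]]])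
  then show ?thesis by (intro tendsto_divide_0[OF tendsto_const] filterlim_at_top_imp_at_infinity)
qed

lemma ev_good: "\<forall>\<^sub>F p in FF. 1 \<le> fst p \<and> 1 \<le> fst (snd p) \<and> 2 \<le> snd (snd p)"
proof -
  have a: "\<forall>\<^sub>F p in FF. 1 \<le> fst p"
    using filterlim_fst[of sequentially "sequentially \<times>\<^sub>F sequentially"] unfolding filterlim_at_top by blast
  have b: "\<forall>\<^sub>F p in FF. 1 \<le> fst (snd p)"
    using filterlim_compose[OF filterlim_fst[of sequentially sequentially] filterlim_snd[of "sequentially \<times>\<^sub>F sequentially" sequentially]]
    unfolding filterlim_at_top by blast
  have c: "\<forall>\<^sub>F p in FF. 2 \<le> snd (snd p)"
    using filterlim_compose[OF filterlim_snd[of sequentially sequentially] filterlim_snd[of "sequentially \<times>\<^sub>F sequentially" sequentially]]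
    unfolding filterlim_at_top by blast
  show ?thesis using a b c by eventually_elim auto
qed

lemma evF:
  assumes "\<And>N3 N2 n. 1 \<le> N3 \<Longrightarrow> 1 \<le> N2 \<Longrightarrow> 2 \<le> n \<Longrightarrow> P (N3, N2, n)"
  shows "\<forall>\<^sub>F p in FF. P p"
  using ev_good by (rule eventually_mono) (use assms in \<open>auto simp: split_beta\<close>)

theorem theorem3p3:
  fixes b0 tau xi dl s3 s2 sg se :: real
    and M :: "nat \<Rightarrow> nat \<Rightarrow> nat \<Rightarrow> 'a measure"
    and Z :: "nat \<Rightarrow> nat \<Rightarrow> nat \<Rightarrow> eff \<Rightarrow> 'a \<Rightarrow> real"
  assumes "s3 > 0" "s2 > 0" "sg > 0" "se > 0"
    and "\<And>N3 N2 n. N3 \<ge> 1 \<Longrightarrow> N2 \<ge> 1 \<Longrightarrow> n \<ge> 2 \<Longrightarrow>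
           model_effects (M N3 N2 n) N3 N2 n s3 s2 sg se (Z N3 N2 n)"
  shows "\<forall>x. ((\<lambda>(N3, N2, n). measure (M N3 N2 n)
              {\<omega> \<in> space (M N3 N2 n).
                 var_hat N3 N2 n (Yobs b0 tau xi dl N3 (Z N3 N2 n) \<omega>) > 0 \<and>
                 T_stat dl N3 N2 n (Yobs b0 tau xi dl N3 (Z N3 N2 n) \<omega>) \<le> x})
            \<longlongrightarrow> Phi x) (at_top \<times>\<^sub>F at_top \<times>\<^sub>F at_top)"
proof (intro allI)
  fix x :: real
  have sd: "s3 > 0" "s2 > 0" "sg > 0" "se > 0" using assms(1-4) .
  have mI: "mdl (M N3 N2 n) N3 N2 n s3 s2 sg se (Z N3 N2 n)" if "1 \<le> N3" "1 \<le> N2" "2 \<le> n" for N3 N2 n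
    using assms that by (simp add: mdl_def)
  define MM where "MM = (\<lambda>(N3,N2,n). M N3 N2 n)"
  define Qf where "Qf = (\<lambda>(N3,N2,n). Qv N3 (Z N3 N2 n))"
  define T2 where "T2 = (\<lambda>(N3,N2,n) \<omega>. (aT N3 (Z N3 N2 n) \<omega>)\<^sup>2)"
  define C2 where "C2 = (\<lambda>(N3,N2,n) \<omega>. (aC N3 (Z N3 N2 n) \<omega>)\<^sup>2)"
  define Af where "Af = (\<lambda>(N3,N2,n). Av N3 (Z N3 N2 n))"
  define Bf where "Bf = (\<lambda>(N3,N2,n). Bv N3 N2 n (Z N3 N2 n))"
  define S1f where "S1f = (\<lambda>(N3,N2,n) \<omega>. SS1 N3 N2 n (Yobs b0 tau xi dl N3 (Z N3 N2 n) \<omega>) / (4 * real N3 * real N2 * real n))"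
  define Ef where "Ef = (\<lambda>(N3,N2,n) \<omega>. Ee N3 N2 n (Z N3 N2 n) \<omega> / real n)"
  define V1f where "V1f = (\<lambda>(N3,N2,n) \<omega>. sigma_e_hat2 N3 N2 n (Yobs b0 tau xi dl N3 (Z N3 N2 n) \<omega>) * (1 - real N2) / (real n * real N2))"
  define Rf where "Rf = (\<lambda>(N3,N2,n) \<omega>. var_hat N3 N2 n (Yobs b0 tau xi dl N3 (Z N3 N2 n) \<omega>) /
        (4 / (real N3 * real N2 * real n) * (se\<^sup>2 + real n * real N2 * sg\<^sup>2)))"
  define Wf where "Wf = (\<lambda>(N3,N2,n) \<omega>. ((aT N3 (Z N3 N2 n) \<omega> - aC N3 (Z N3 N2 n) \<omega>) + (bT N3 N2 n (Z N3 N2 n) \<omega> - bC N3 N2 n (Z N3 N2 n) \<omega>))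
        / sqrt (4 / (real N3 * real N2 * real n) * (se\<^sup>2 + real n * real N2 * sg\<^sup>2)))"

  have cQ: "cip MM FF Qf (sg\<^sup>2)"
    apply (rule cip_L2[where h="\<lambda>p. sg^4 / real (fst p)"])
     apply (rule evF)
    subgoal premises h for N3 N2 n
    proof -
      interpret mdl "M N3 N2 n" N3 N2 n s3 s2 sg se "Z N3 N2 n" by (rule mI[OF h])
      show ?thesis using ps Qv_m Qv_L2 by (simp add: MM_def Qf_def)
    qed
    by (rule lim_fst)

  have cT2: "cip MM FF T2 0"
    apply (rule cip_L1[where h="\<lambda>p. 2 * sg\<^sup>2 / real (fst p)"])
     apply (rule evF)
    subgoal premises h for N3 N2 n
    proof -
      interpret mdl "M N3 N2 n" N3 N2 n s3 s2 sg se "Z N3 N2 n" by (rule mI[OF h])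
      show ?thesis using ps aT_m aT_sq by (simp add: MM_def T2_def)
    qed
    by (rule lim_fst)

  have cC2: "cip MM FF C2 0"
    apply (rule cip_L1[where h="\<lambda>p. 2 * sg\<^sup>2 / real (fst p)"])
     apply (rule evF)
    subgoal premises h for N3 N2 n
    proof -
      interpret mdl "M N3 N2 n" N3 N2 n s3 s2 sg se "Z N3 N2 n" by (rule mI[OF h])
      show ?thesis using ps aC_m aC_sq by (simp add: MM_def C2_def)
    qed
    by (rule lim_fst)

  have cSum: "cip MM FF (\<lambda>p \<omega>. T2 p \<omega> + C2 p \<omega>) (0 + 0)"
    by (rule cip_cont2'[OF cT2 cC2, where g="\<lambda>x y. x + y"])
       (intro continuous_intros, unfold borel_prod[symmetric], measurable)
  have cA0: "cip MM FF (\<lambda>p \<omega>. Qf p \<omega> - (T2 p \<omega> + C2 p \<omega>) / 4) (sg\<^sup>2 - (0 + 0) / 4)"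
    by (rule cip_cont2'[OF cQ cSum, where g="\<lambda>x y. x - y / 4"])
       (intro continuous_intros, unfold borel_prod[symmetric], measurable)
  have cA: "cip MM FF Af (sg\<^sup>2)"
    apply (rule cip_cong[OF cA0[simplified]])
     apply (rule evF)
    subgoal premises h for N3 N2 n
    proof -
      interpret mdl "M N3 N2 n" N3 N2 n s3 s2 sg se "Z N3 N2 n" by (rule mI[OF h])
      show ?thesis using Av_m by (simp add: MM_def Af_def Qf_def T2_def C2_def Av_def)
    qed
    done

  have cB: "cip MM FF Bf 0"
    apply (rule cip_L1[where h="\<lambda>p. se\<^sup>2 / real (snd (snd p))"])
     apply (rule evF)
    subgoal premises h for N3 N2 n
    proof -
      interpret mdl "M N3 N2 n" N3 N2 n s3 s2 sg se "Z N3 N2 n" by (rule mI[OF h])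
      have "\<forall>\<omega>\<in>space (M N3 N2 n). 0 \<le> Bv N3 N2 n (Z N3 N2 n) \<omega>" unfolding Bv_def using pos3 by (auto intro!: divide_nonneg_pos sum_nonneg)
      then show ?thesis using ps Bv_m Bv_int Bv_exp by (simp add: MM_def Bf_def)
    qed
    by (rule lim_n)

  have cL: "cip MM FF (\<lambda>p \<omega>. Af p \<omega> - 2 * sqrt (Af p \<omega> * Bf p \<omega>)) (sg\<^sup>2 - 2 * sqrt (sg\<^sup>2 * 0))"
    by (rule cip_cont2'[OF cA cB, where g="\<lambda>x y. x - 2 * sqrt (x * y)"])
       (intro continuous_intros, unfold borel_prod[symmetric], measurable)
  have cU: "cip MM FF (\<lambda>p \<omega>. Af p \<omega> + 2 * sqrt (Af p \<omega> * Bf p \<omega>) + Bf p \<omega>) (sg\<^sup>2 + 2 * sqrt (sg\<^sup>2 * 0) + 0)"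
    by (rule cip_cont2'[OF cA cB, where g="\<lambda>x y. x + 2 * sqrt (x * y) + y"])
       (intro continuous_intros, unfold borel_prod[symmetric], measurable)

  have cS1: "cip MM FF S1f (sg\<^sup>2)"
    apply (rule cip_sandwich[OF cL[simplified] cU[simplified]])
    apply (rule evF)
    subgoal premises h for N3 N2 n
    proof -
      interpret mdl "M N3 N2 n" N3 N2 n s3 s2 sg se "Z N3 N2 n" by (rule mI[OF h])
      show ?thesis unfolding MM_def S1f_def Af_def Bf_def prod.case
        by (intro conjI ballI S1_m S1_bounds(3,4)[OF pos3])
    qed
    done

  have cE: "cip MM FF Ef 0"
    apply (rule cip_L1[where h="\<lambda>p. 2 * se\<^sup>2 / real (snd (snd p))"])
     apply (rule evF)
    subgoal premises h for N3 N2 n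
    proof -
      interpret mdl "M N3 N2 n" N3 N2 n s3 s2 sg se "Z N3 N2 n" by (rule mI[OF h])
      have nn: "\<forall>\<omega>\<in>space (M N3 N2 n). 0 \<le> Ee N3 N2 n (Z N3 N2 n) \<omega> / real n"
        unfolding Ee_def using pos3 h by (auto intro!: divide_nonneg_pos sum_nonneg add_nonneg_nonneg)
      have "real n * se\<^sup>2 / (real n - 1) / real n \<le> 2 * se\<^sup>2 / real n"
        using h sd by (simp add: field_simps)
      then show ?thesis using ps Ee_m Ee_int Ee_exp nn by (simp add: MM_def Ef_def)
    qed
    by (rule lim_n)
  have cEn: "cip MM FF (\<lambda>p \<omega>. - Ef p \<omega>) (- 0)"
    by (rule cip_cont2'[OF cE cE, where g="\<lambda>x y. - x"])
       (intro continuous_intros, unfold borel_prod[symmetric], measurable)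
  have cV1: "cip MM FF V1f 0"
    apply (rule cip_sandwich[OF cEn[simplified] cE])
    apply (rule evF)
    subgoal premises h for N3 N2 n
    proof -
      interpret mdl "M N3 N2 n" N3 N2 n s3 s2 sg se "Z N3 N2 n" by (rule mI[OF h])
      have k0: "0 \<le> (real N2 - 1) / (real n * real N2)" using h by simp
      have k1: "(real N2 - 1) / (real n * real N2) \<le> 1 / real n" using h by (simp add: field_simps)
      have b: "- (Ee N3 N2 n (Z N3 N2 n) \<omega> / real n) \<le> V1f (N3, N2, n) \<omega> \<and> V1f (N3, N2, n) \<omega> \<le> Ee N3 N2 n (Z N3 N2 n) \<omega> / real n" for \<omega>
      proof -
        define \<sigma> where "\<sigma> = sigma_e_hat2 N3 N2 n (Yobs b0 tau xi dl N3 (Z N3 N2 n) \<omega>)"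
        have s0: "0 \<le> \<sigma>" and sE: "\<sigma> \<le> Ee N3 N2 n (Z N3 N2 n) \<omega>"
          using sige_bounds[of N3 N2 n b0 tau xi dl "Z N3 N2 n" \<omega>] h unfolding \<sigma>_def by auto
        have V: "V1f (N3, N2, n) \<omega> = - (\<sigma> * ((real N2 - 1) / (real n * real N2)))"
          unfolding V1f_def \<sigma>_def prod.case by (simp add: algebra_simps diff_divide_distrib)
        have "\<sigma> * ((real N2 - 1) / (real n * real N2)) \<le> \<sigma> * (1 / real n)" using k1 s0 by (rule mult_left_mono)
        also have "\<dots> \<le> Ee N3 N2 n (Z N3 N2 n) \<omega> / real n" using sE h by (simp add: divide_right_mono)
        finally have u: "\<sigma> * ((real N2 - 1) / (real n * real N2)) \<le> Ee N3 N2 n (Z N3 N2 n) \<omega> / real n" .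
        have "0 \<le> \<sigma> * ((real N2 - 1) / (real n * real N2))" using s0 k0 by (rule mult_nonneg_nonneg)
        then show ?thesis unfolding V using u by linarith
      qed
      have m: "V1f (N3, N2, n) \<in> borel_measurable (M N3 N2 n)"
        unfolding V1f_def prod.case using sige_m[of b0 tau xi dl] by measurable
      show ?thesis using b m by (simp add: MM_def Ef_def)
    qed
    done
  have cK: "cip MM FF (\<lambda>p \<omega>. V1f p \<omega> + S1f p \<omega>) (0 + sg\<^sup>2)"
    by (rule cip_cont2'[OF cV1 cS1, where g="\<lambda>x y. x + y"])
       (intro continuous_intros, unfold borel_prod[symmetric], measurable)
  define Den :: "nat \<times> nat \<times> nat \<Rightarrow> real" where "Den = (\<lambda>p. se\<^sup>2 / (real (snd (snd p)) * real (fst (snd p))) + sg\<^sup>2)"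
  have Den_lim: "(Den \<longlongrightarrow> sg\<^sup>2) FF"
  proof -
    have "((\<lambda>p. se\<^sup>2 / (real (snd (snd p)) * real (fst (snd p)))) \<longlongrightarrow> 0) FF"
    proof (rule tendsto_sandwich[where f="\<lambda>_. 0" and h="\<lambda>p. se\<^sup>2 / real (snd (snd p))"])
      show "\<forall>\<^sub>F p in FF. 0 \<le> se\<^sup>2 / (real (snd (snd p)) * real (fst (snd p)))" by (rule evF) simp
      show "\<forall>\<^sub>F p in FF. se\<^sup>2 / (real (snd (snd p)) * real (fst (snd p))) \<le> se\<^sup>2 / real (snd (snd p))"
        apply (rule evF)
        subgoal for N3 N2 n using mult_right_mono[of 1 "real N2" "se\<^sup>2"] by (simp add: field_simps)
        done
    qed (auto intro: lim_n)
    then show ?thesis unfolding Den_def using tendsto_add[OF _ tendsto_const, of _ 0 FF "sg\<^sup>2"] by simp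
  qed
  have cDen: "cip MM FF (\<lambda>p \<omega>. Den p) (sg\<^sup>2)"
  proof (rule cip_det[OF _ Den_lim])
    show "\<forall>\<^sub>F p in FF. prob_space (MM p)"
      apply (rule evF)
      subgoal premises h for N3 N2 n
      proof -
        interpret mdl "M N3 N2 n" N3 N2 n s3 s2 sg se "Z N3 N2 n" by (rule mI[OF h])
        show ?thesis using ps by (simp add: MM_def)
      qed
      done
  qed
  have cR0: "cip MM FF (\<lambda>p \<omega>. (V1f p \<omega> + S1f p \<omega>) / Den p) ((0 + sg\<^sup>2) / sg\<^sup>2)"
    by (rule cip_cont2'[OF cK cDen, where g="\<lambda>x y. x / y"])
       (use sd in \<open>intro continuous_intros, simp, unfold borel_prod[symmetric], measurable\<close>)
  have one: "(0 + sg\<^sup>2) / sg\<^sup>2 = 1" using sd by simp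
  have cR: "cip MM FF Rf 1"
    apply (rule cip_cong[OF cR0[unfolded one]])
     apply (rule evF)
    subgoal premises h for N3 N2 n
    proof -
      interpret mdl "M N3 N2 n" N3 N2 n s3 s2 sg se "Z N3 N2 n" by (rule mI[OF h])
      have "Rf (N3, N2, n) \<omega> = Rv b0 tau xi dl \<omega>" for \<omega> by (simp add: Rf_def Rv_def Vv_def)
      moreover have "Rf (N3, N2, n) = Rv b0 tau xi dl" by (simp add: fun_eq_iff Rf_def Rv_def Vv_def)
      ultimately show ?thesis using sd Rv_m[of b0 tau xi dl] sd
        by (simp add: MM_def Rv_eq V1f_def S1f_def Den_def mult.commute)
    qed
    done
  have fin: "((\<lambda>p. measure (MM p) {\<omega>\<in>space (MM p). 0 < Rf p \<omega> \<and> Wf p \<omega> / sqrt (Rf p \<omega>) \<le> x}) \<longlongrightarrow> Phi x) FF"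
  proof (rule final_step[OF cR])
    show "\<forall>\<^sub>F p in FF. Wf p \<in> borel_measurable (MM p) \<and> (\<forall>t. measure (MM p) {\<omega>\<in>space (MM p). Wf p \<omega> \<le> t} = Phi t)"
      apply (rule evF)
      subgoal premises h for N3 N2 n
      proof -
        interpret mdl "M N3 N2 n" N3 N2 n s3 s2 sg se "Z N3 N2 n" by (rule mI[OF h])
        have "Wf (N3, N2, n) = Wv'" by (simp add: fun_eq_iff Wf_def Wv'_def Dv_def Vv_def)
        then show ?thesis using Wv'_m W_Phi by (simp add: MM_def)
      qed
      done
  qed
  have eq: "\<forall>\<^sub>F p in FF. measure (MM p) {\<omega>\<in>space (MM p). 0 < Rf p \<omega> \<and> Wf p \<omega> / sqrt (Rf p \<omega>) \<le> x}
     = (\<lambda>(N3, N2, n). measure (M N3 N2 n)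
              {\<omega> \<in> space (M N3 N2 n).
                 var_hat N3 N2 n (Yobs b0 tau xi dl N3 (Z N3 N2 n) \<omega>) > 0 \<and>
                 T_stat dl N3 N2 n (Yobs b0 tau xi dl N3 (Z N3 N2 n) \<omega>) \<le> x}) p"
    apply (rule evF)
    subgoal premises h for N3 N2 n
    proof -
      interpret mdl "M N3 N2 n" N3 N2 n s3 s2 sg se "Z N3 N2 n" by (rule mI[OF h])
      have "Wf (N3, N2, n) = Wv'" by (simp add: fun_eq_iff Wf_def Wv'_def Dv_def Vv_def)
      moreover have "Rf (N3, N2, n) = Rv b0 tau xi dl" by (simp add: fun_eq_iff Rf_def Rv_def Vv_def)
      ultimately show ?thesis using event_eq[of b0 tau xi dl x] by (simp add: MM_def)
    qed
    done
  show "((\<lambda>(N3, N2, n). measure (M N3 N2 n)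
              {\<omega> \<in> space (M N3 N2 n).
                 var_hat N3 N2 n (Yobs b0 tau xi dl N3 (Z N3 N2 n) \<omega>) > 0 \<and>
                 T_stat dl N3 N2 n (Yobs b0 tau xi dl N3 (Z N3 N2 n) \<omega>) \<le> x})
            \<longlongrightarrow> Phi x) (at_top \<times>\<^sub>F at_top \<times>\<^sub>F at_top)"
    by (rule tendsto_cong[THEN iffD1, OF eq fin])
qed

end
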